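(* Let $\Omega\subset\mathbb{R}^d$ be measurable, let $\varrho:\mathbb{R}\to\mathbb{R}$ be measurable with $\varrho(0)=0$, and let $\sigma\in\mathbb{N}$. For $f\in L^2(\Omega)$ and $\varepsilon\in(0,1)$ let $W^{\sigma,\varrho}_\varepsilon(f):=\inf\{W\in\mathbb{N}:\exists g\in\mathcal{NN}^{\sigma,\varrho}_{d,W}\text{ with }\|f-g\|_{L^2(\Omega)}\le\varepsilon\}\in\mathbb{N}\cup\{\infty\}$, and for $\tau>0$ let \[\mathcal{A}^\tau_{\mathcal{NN},\sigma,\varrho}:=\{f\in L^2(\Omega):\exists C>0\ \forall\varepsilon\in(0,1):W^{\sigma,\varrho}_\varepsilon(f)\le C\varepsilon^{-\tau}\}.\] Then there is a codec $\mathcal{C}=((E_R,D_R))_{R\in\mathbb{N}}$ with $E_R:L^2(\Omega)\to\{0,1\}^R$, $D_R:\{0,1\}^R\to L^2(\Omega)$ (depending on $\sigma,\varrho,\Omega$) such that for every $\tau>0$, \[\mathcal{A}^\tau_{\mathcal{NN},\sigma,\varrho}\subset\{f\in L^2(\Omega):\sup_{R\in\mathbb{N}}R^{\tau^{-1}-\delta}\|f-D_R(E_R(f))\|_{L^2(\Omega)}<\infty\}\qquad\forall\delta\in(0,\tau^{-1}).\]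
   Context: Neural networks: for $L\in\mathbb{N}$ and $\mathbf{N}=(N_0,\dots,N_L)\subset\mathbb{N}$ with $N_0=d$, a network is $\Phi=((A_1,b_1),\dots,(A_L,b_L))$ with $A_\ell\in\mathbb{R}^{N_\ell\times N_{\ell-1}}$, $b_\ell\in\mathbb{R}^{N_\ell}$; its realization $R_\varrho\Phi:\mathbb{R}^d\to\mathbb{R}^{N_L}$ is $x\mapsto x^{(L)}$ with $x^{(0)}=x$, $x^{(\ell+1)}=\varrho(A_{\ell+1}x^{(\ell)}+b_{\ell+1})$ for $0\le\ell\le L-2$ (componentwise), $x^{(L)}=A_Lx^{(L-1)}+b_L$. $W(\Phi)=\sum_\ell(\|A_\ell\|_{\ell^0}+\|b_\ell\|_{\ell^0})$ (number of nonzero entries), $d_{\mathrm{in}}(\Phi)=N_0$, $d_{\mathrm{out}}(\Phi)=N_L$. $\Phi$ is $(\sigma,W)$-quantized if all entries of all $A_\ell,b_\ell$ lie in $[-W^{\sigma\lceil\log_2W\rceil},W^{\sigma\lceil\log_2W\rceil}]\cap2^{-\sigma\lceil\log_2W\rceil^2}\mathbb{Z}$. $\mathcal{NN}^{\sigma,\varrho}_{d,W}=\{R_\varrho\Phi:\Phi\ (\sigma,W)\text{-quantized},\ W(\Phi)\le W,\ d_{\mathrm{in}}(\Phi)=d,\ d_{\mathrm{out}}(\Phi)=1\}$, with functions restricted to $\Omega$. *)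

theory Defs
  imports "HOL-Analysis.Analysis" "HOL-Library.Extended_Nat"
begin

text \<open>Points of R^d are represented as functions nat => real whose coordinates
  0..d-1 are relevant; the ambient measure is the d-fold product of Lebesgue
  measure on the index set {..<d}.\<close>

definition lebd :: "nat \<Rightarrow> (nat \<Rightarrow> real) measure" where
  "lebd d = PiM {..<d} (\<lambda>_. lborel)"

definition lebOm :: "nat \<Rightarrow> (nat \<Rightarrow> real) set \<Rightarrow> (nat \<Rightarrow> real) measure" where
  "lebOm d \<Omega> = restrict_space (lebd d) \<Omega>"

definition L2 :: "nat \<Rightarrow> (nat \<Rightarrow> real) set \<Rightarrow> ((nat \<Rightarrow> real) \<Rightarrow> real) set" where
  "L2 d \<Omega> = {f. f \<in> borel_measurable (lebOm d \<Omega>) \<and>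
                   (\<integral>\<^sup>+ x. ennreal ((f x)\<^sup>2) \<partial>lebOm d \<Omega>) < \<infinity>}"

definition L2dist_sq :: "nat \<Rightarrow> (nat \<Rightarrow> real) set \<Rightarrow> ((nat \<Rightarrow> real) \<Rightarrow> real)
    \<Rightarrow> ((nat \<Rightarrow> real) \<Rightarrow> real) \<Rightarrow> ennreal" where
  "L2dist_sq d \<Omega> f g = (\<integral>\<^sup>+ x. ennreal ((f x - g x)\<^sup>2) \<partial>lebOm d \<Omega>)"

definition L2dist :: "nat \<Rightarrow> (nat \<Rightarrow> real) set \<Rightarrow> ((nat \<Rightarrow> real) \<Rightarrow> real)
    \<Rightarrow> ((nat \<Rightarrow> real) \<Rightarrow> real) \<Rightarrow> real" where
  "L2dist d \<Omega> f g = sqrt (enn2real (L2dist_sq d \<Omega> f g))"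

text \<open>A network is given by its architecture (N_0,...,N_L) as a
  list of length L+1 and its layers (A_l, b_l) as a list of length L; only the
  entries A_l i j with i < N_l, j < N_(l-1) and b_l i with i < N_l are relevant.\<close>

type_synonym layer = "(nat \<Rightarrow> nat \<Rightarrow> real) \<times> (nat \<Rightarrow> real)"

definition affine :: "nat \<Rightarrow> nat \<Rightarrow> layer \<Rightarrow> (nat \<Rightarrow> real) \<Rightarrow> (nat \<Rightarrow> real)" where
  "affine m n l x = (\<lambda>i. if i < m then (\<Sum>j<n. fst l i j * x j) + snd l i else 0)"

fun realize :: "(real \<Rightarrow> real) \<Rightarrow> nat list \<Rightarrow> layer list \<Rightarrow> (nat \<Rightarrow> real) \<Rightarrow> (nat \<Rightarrow> real)" where
  "realize \<rho> (n # m # ns) [l] x = affine m n l x"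
| "realize \<rho> (n # m # ns) (l # l' # ls) x =
     realize \<rho> (m # ns) (l' # ls) (\<lambda>i. if i < m then \<rho> (affine m n l x i) else 0)"
| "realize \<rho> ns ls x = x"

definition valid_net :: "nat \<Rightarrow> nat list \<Rightarrow> layer list \<Rightarrow> bool" where
  "valid_net d ns ls \<longleftrightarrow> length ls \<ge> 1 \<and> length ns = length ls + 1 \<and>
     hd ns = d \<and> last ns = 1"

definition num_weights :: "nat list \<Rightarrow> layer list \<Rightarrow> nat" where
  "num_weights ns ls = (\<Sum>k<length ls.
      card {(i, j). i < ns ! Suc k \<and> j < ns ! k \<and> fst (ls ! k) i j \<noteq> 0}
    + card {i. i < ns ! Suc k \<and> snd (ls ! k) i \<noteq> 0})"

definition qgrid :: "nat \<Rightarrow> nat \<Rightarrow> real \<Rightarrow> bool" where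
  "qgrid \<sigma> W a \<longleftrightarrow>
     (let k = nat \<lceil>log 2 (real W)\<rceil> in
        \<bar>a\<bar> \<le> real W ^ (\<sigma> * k) \<and> a * 2 ^ (\<sigma> * k\<^sup>2) \<in> \<int>)"

definition quantized :: "nat \<Rightarrow> nat \<Rightarrow> nat list \<Rightarrow> layer list \<Rightarrow> bool" where
  "quantized \<sigma> W ns ls \<longleftrightarrow> (\<forall>k<length ls.
      (\<forall>i j. i < ns ! Suc k \<and> j < ns ! k \<longrightarrow> qgrid \<sigma> W (fst (ls ! k) i j)) \<and>
      (\<forall>i. i < ns ! Suc k \<longrightarrow> qgrid \<sigma> W (snd (ls ! k) i)))"

text \<open>The class NN^{sigma,rho}_{d,W} (as functions on points; restriction to Omega
  is implicit since only values on Omega enter the L2 norm).\<close>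
definition NN :: "nat \<Rightarrow> (real \<Rightarrow> real) \<Rightarrow> nat \<Rightarrow> nat \<Rightarrow> ((nat \<Rightarrow> real) \<Rightarrow> real) set" where
  "NN \<sigma> \<rho> d W = {(\<lambda>x. realize \<rho> ns ls x 0) | ns ls.
      valid_net d ns ls \<and> quantized \<sigma> W ns ls \<and> num_weights ns ls \<le> W}"

definition W_eps :: "nat \<Rightarrow> (real \<Rightarrow> real) \<Rightarrow> nat \<Rightarrow> (nat \<Rightarrow> real) set
    \<Rightarrow> ((nat \<Rightarrow> real) \<Rightarrow> real) \<Rightarrow> real \<Rightarrow> enat" where
  "W_eps \<sigma> \<rho> d \<Omega> f \<epsilon> = (INF W \<in> {W. W \<ge> 1 \<and>
       (\<exists>g \<in> NN \<sigma> \<rho> d W. L2dist_sq d \<Omega> f g \<le> ennreal (\<epsilon>\<^sup>2))}. enat W)"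

definition approx_space :: "real \<Rightarrow> nat \<Rightarrow> (real \<Rightarrow> real) \<Rightarrow> nat \<Rightarrow> (nat \<Rightarrow> real) set
    \<Rightarrow> ((nat \<Rightarrow> real) \<Rightarrow> real) set" where
  "approx_space \<tau> \<sigma> \<rho> d \<Omega> = {f \<in> L2 d \<Omega>. \<exists>C>0. \<forall>\<epsilon>. 0 < \<epsilon> \<and> \<epsilon> < 1 \<longrightarrow>
       W_eps \<sigma> \<rho> d \<Omega> f \<epsilon> \<noteq> \<infinity> \<and>
       real (the_enat (W_eps \<sigma> \<rho> d \<Omega> f \<epsilon>)) \<le> C * \<epsilon> powr (- \<tau>)}"

end

theory Submission
  imports Defs "HOL-Real_Asymp.Real_Asymp"
begin

definition act :: "(real \<Rightarrow> real) \<Rightarrow> nat \<Rightarrow> nat \<Rightarrow> layer \<Rightarrow> (nat \<Rightarrow> real) \<Rightarrow> (nat \<Rightarrow> real)" where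
  "act \<rho> m n l x = (\<lambda>i. if i < m then \<rho> (affine m n l x i) else 0)"

fun hid :: "(real \<Rightarrow> real) \<Rightarrow> nat list \<Rightarrow> layer list \<Rightarrow> (nat \<Rightarrow> real) \<Rightarrow> nat \<Rightarrow> (nat \<Rightarrow> real)" where
  "hid \<rho> ns ls x 0 = x"
| "hid \<rho> ns ls x (Suc k) = act \<rho> (ns ! Suc k) (ns ! k) (ls ! k) (hid \<rho> ns ls x k)"

lemma hid_Cons: "hid \<rho> (n # ns) (l # ls) x (Suc k) = hid \<rho> ns ls (act \<rho> (ns ! 0) n l x) k"
  by (induction k) auto

lemma realize_hid:
  assumes "length ns = length ls + 1" "length ls \<ge> 1"
  shows "realize \<rho> ns ls x = affine (ns ! length ls) (ns ! (length ls - 1)) (ls ! (length ls - 1))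
            (hid \<rho> ns ls x (length ls - 1))"
  using assms
proof (induction \<rho> ns ls x rule: realize.induct)
  case (1 \<rho> n m ns l x)
  then show ?case by simp
next
  case (2 \<rho> n m ns l l' ls x)
  have e: "realize \<rho> (n # m # ns) (l # l' # ls) x = realize \<rho> (m # ns) (l' # ls) (act \<rho> m n l x)"
    by (simp add: act_def)
  have h: "hid \<rho> (n # m # ns) (l # l' # ls) x (Suc (length ls)) = hid \<rho> (m # ns) (l' # ls) (act \<rho> m n l x) (length ls)"
    by (simp only: hid_Cons nth_Cons_0)
  show ?case unfolding e using 2 h
    by (simp del: hid.simps add: act_def)
qed auto

lemma affine_cong:
  assumes "\<And>j. j < n \<Longrightarrow> x j = y j"
  shows "affine m n l x = affine m n l y"
  using assms unfolding affine_def by (auto intro!: sum.cong)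

lemma measurable_affine:
  "(\<forall>i. (\<lambda>y. h y i) \<in> borel_measurable M) \<Longrightarrow> (\<lambda>y. affine m n l (h y) i) \<in> borel_measurable M"
proof -
  assume h: "\<forall>i. (\<lambda>y. h y i) \<in> borel_measurable M"
  have "(\<lambda>y. (\<Sum>j<n. fst l i j * h y j) + snd l i) \<in> borel_measurable M"
    using h by (intro borel_measurable_add borel_measurable_sum borel_measurable_times) auto
  then show ?thesis unfolding Defs.affine_def by auto
qed

lemma measurable_hid:
  assumes "\<rho> \<in> borel_measurable borel" "\<forall>i. (\<lambda>y. h y i) \<in> borel_measurable M"
  shows "(\<lambda>y. hid \<rho> ns ls (h y) k i) \<in> borel_measurable M"
  using assms(2)
proof (induction k arbitrary: i)
  case 0
  then show ?case by simp
next
  case (Suc k)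
  have "(\<lambda>y. if i < ns ! Suc k then \<rho> (affine (ns ! Suc k) (ns ! k) (ls ! k) (hid \<rho> ns ls (h y) k) i) else 0) \<in> borel_measurable M"
    using measurable_affine[of "\<lambda>y. hid \<rho> ns ls (h y) k"] Suc assms(1) by (auto intro: measurable_compose)
  then show ?case by (simp add: act_def)
qed

lemma measurable_realize:
  assumes "\<rho> \<in> borel_measurable borel" "\<forall>i. (\<lambda>y. h y i) \<in> borel_measurable M"
    "length ns = length ls + 1" "length ls \<ge> 1"
  shows "(\<lambda>y. realize \<rho> ns ls (h y) i) \<in> borel_measurable M"
  unfolding realize_hid[OF assms(3,4)]
  by (rule measurable_affine) (use measurable_hid[OF assms(1,2)] in auto)

definition zrow :: "nat list \<Rightarrow> layer list \<Rightarrow> nat \<Rightarrow> bool" where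
  "zrow ns ls t \<longleftrightarrow> (\<forall>i<ns ! Suc t. snd (ls ! t) i = 0 \<and> (\<forall>j<ns ! t. fst (ls ! t) i j = 0))"

definition Zl :: layer where "Zl = (\<lambda>_ _. 0, \<lambda>_. 0)"

definition cw :: "nat list \<Rightarrow> layer list \<Rightarrow> nat \<Rightarrow> nat" where
  "cw ns ls k = card {(i, j). i < ns ! Suc k \<and> j < ns ! k \<and> fst (ls ! k) i j \<noteq> 0}
    + card {i. i < ns ! Suc k \<and> snd (ls ! k) i \<noteq> 0}"

lemma num_weights_cw: "num_weights ns ls = (\<Sum>k<length ls. cw ns ls k)"
  unfolding num_weights_def cw_def by simp

lemma cw_pos: assumes "\<not> zrow ns ls t" shows "cw ns ls t \<ge> 1"
proof -
  from assms obtain i where i: "i < ns ! Suc t" "snd (ls ! t) i \<noteq> 0 \<or> (\<exists>j<ns ! t. fst (ls ! t) i j \<noteq> 0)"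
    unfolding zrow_def by blast
  show ?thesis
  proof (cases "snd (ls ! t) i \<noteq> 0")
    case True
    have "i \<in> {i. i < ns ! Suc t \<and> snd (ls ! t) i \<noteq> 0}" using i True by auto
    moreover have "finite {i. i < ns ! Suc t \<and> snd (ls ! t) i \<noteq> 0}" by auto
    ultimately have "card {i. i < ns ! Suc t \<and> snd (ls ! t) i \<noteq> 0} \<ge> 1"
      unfolding One_nat_def Suc_le_eq card_gt_0_iff by blast
    then show ?thesis unfolding cw_def by linarith
  next
    case False
    then obtain j where j: "j < ns ! t" "fst (ls ! t) i j \<noteq> 0" using i by auto
    have "(i, j) \<in> {(i, j). i < ns ! Suc t \<and> j < ns ! t \<and> fst (ls ! t) i j \<noteq> 0}" using i j by auto
    moreover have "finite {(i, j). i < ns ! Suc t \<and> j < ns ! t \<and> fst (ls ! t) i j \<noteq> 0}"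
      by (rule finite_subset[of _ "{..<ns ! Suc t} \<times> {..<ns ! t}"]) auto
    ultimately have "card {(i, j). i < ns ! Suc t \<and> j < ns ! t \<and> fst (ls ! t) i j \<noteq> 0} \<ge> 1"
      unfolding One_nat_def Suc_le_eq card_gt_0_iff by blast
    then show ?thesis unfolding cw_def by linarith
  qed
qed

lemma card_nonzero_layers:
  assumes "T \<subseteq> {..<length ls}" "\<forall>t\<in>T. \<not> zrow ns ls t"
  shows "card T \<le> num_weights ns ls"
proof -
  have "card T = (\<Sum>t\<in>T. 1)" by simp
  also have "\<dots> \<le> (\<Sum>t\<in>T. cw ns ls t)" using assms cw_pos by (intro sum_mono) auto
  also have "\<dots> \<le> (\<Sum>t<length ls. cw ns ls t)" using assms(1) by (intro sum_mono2) auto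
  finally show ?thesis by (simp add: num_weights_cw)
qed

lemma hid_zrow:
  assumes "\<rho> 0 = 0" "zrow ns ls t"
  shows "hid \<rho> ns ls x (Suc t) = (\<lambda>_. 0)"
  using assms unfolding zrow_def by (auto simp: act_def Defs.affine_def)

lemma hid_cut:
  assumes "\<rho> 0 = 0" "zrow ns ls t" "Suc t \<le> length ls" "Suc t \<le> length ns"
  shows "hid \<rho> (ns ! 0 # drop (Suc t) ns) (Zl # drop (Suc t) ls) x (Suc k) = hid \<rho> ns ls x (Suc t + k)"
proof (induction k)
  case 0
  have "hid \<rho> (ns ! 0 # drop (Suc t) ns) (Zl # drop (Suc t) ls) x (Suc 0) = (\<lambda>_. 0)"
    using assms(1) by (auto simp: act_def Defs.affine_def Zl_def)
  then show ?case using hid_zrow[of \<rho> ns ls t, OF assms(1,2)] by simp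
next
  case (Suc k)
  let ?ns = "ns ! 0 # drop (Suc t) ns" and ?ls = "Zl # drop (Suc t) ls"
  have "hid \<rho> ?ns ?ls x (Suc (Suc k)) = act \<rho> (?ns ! Suc (Suc k)) (?ns ! Suc k) (?ls ! Suc k) (hid \<rho> ?ns ?ls x (Suc k))"
    by (simp only: hid.simps)
  also have "\<dots> = act \<rho> (ns ! Suc (Suc t + k)) (ns ! (Suc t + k)) (ls ! (Suc t + k)) (hid \<rho> ns ls x (Suc t + k))"
    using Suc.IH assms(3,4) by (simp only: nth_Cons_Suc nth_drop add_Suc_right)
  also have "\<dots> = hid \<rho> ns ls x (Suc t + Suc k)"
    by (simp only: add_Suc_right hid.simps)
  finally show ?case .
qed

lemma realize_cut:
  assumes "\<rho> 0 = 0" "zrow ns ls t" "Suc (Suc t) \<le> length ls" "length ns = length ls + 1"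
  shows "realize \<rho> (ns ! 0 # drop (Suc t) ns) (Zl # drop (Suc t) ls) x = realize \<rho> ns ls x"
proof -
  let ?ns = "ns ! 0 # drop (Suc t) ns" and ?ls = "Zl # drop (Suc t) ls"
  define L where "L = length ls"
  have l2: "length ?ls = L - t" using assms(3) unfolding L_def by simp
  have e1: "length ?ls - 1 = Suc (L - Suc (Suc t))" using assms(3) l2 unfolding L_def by simp
  have "realize \<rho> ?ns ?ls x = affine (?ns ! length ?ls) (?ns ! (length ?ls - 1)) (?ls ! (length ?ls - 1))
            (hid \<rho> ?ns ?ls x (length ?ls - 1))"
    by (rule realize_hid) (use assms in auto)
  also have "hid \<rho> ?ns ?ls x (length ?ls - 1) = hid \<rho> ns ls x (L - 1)"
  proof -
    have "hid \<rho> ?ns ?ls x (length ?ls - 1) = hid \<rho> ?ns ?ls x (Suc (L - Suc (Suc t)))" by (simp only: e1)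
    also have "\<dots> = hid \<rho> ns ls x (Suc t + (L - Suc (Suc t)))"
      by (rule hid_cut[of \<rho> ns ls t, OF assms(1,2)]) (use assms(3,4) in auto)
    also have "Suc t + (L - Suc (Suc t)) = L - 1" using assms(3) unfolding L_def by simp
    finally show ?thesis .
  qed
  also have "?ns ! length ?ls = ns ! L"
  proof -
    have "length ?ls = Suc (L - Suc t)" using l2 assms(3) unfolding L_def by simp
    then have "?ns ! length ?ls = drop (Suc t) ns ! (L - Suc t)" by simp
    also have "\<dots> = ns ! (Suc t + (L - Suc t))" using assms(3,4) unfolding L_def by (simp add: nth_drop)
    also have "Suc t + (L - Suc t) = L" using assms(3) unfolding L_def by simp
    finally show ?thesis .
  qed
  also have "?ns ! (length ?ls - 1) = ns ! (L - 1)"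
  proof -
    have "?ns ! (length ?ls - 1) = drop (Suc t) ns ! (L - Suc (Suc t))" unfolding e1 by simp
    also have "\<dots> = ns ! (Suc t + (L - Suc (Suc t)))" using assms(3,4) unfolding L_def by (simp add: nth_drop)
    also have "Suc t + (L - Suc (Suc t)) = L - 1" using assms(3) unfolding L_def by simp
    finally show ?thesis .
  qed
  also have "?ls ! (length ?ls - 1) = ls ! (L - 1)"
  proof -
    have "?ls ! (length ?ls - 1) = drop (Suc t) ls ! (L - Suc (Suc t))" unfolding e1 by simp
    also have "\<dots> = ls ! (Suc t + (L - Suc (Suc t)))" using assms(3,4) unfolding L_def by (simp add: nth_drop)
    also have "Suc t + (L - Suc (Suc t)) = L - 1" using assms(3) unfolding L_def by simp
    finally show ?thesis .
  qed
  also have "affine (ns ! L) (ns ! (L - 1)) (ls ! (L - 1)) (hid \<rho> ns ls x (L - 1)) = realize \<rho> ns ls x"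
  proof -
    have "Suc (length ls - Suc 0) = length ls" using assms(3) by simp
    then show ?thesis using realize_hid[of ns ls \<rho> x] assms unfolding L_def by simp
  qed
  finally show ?thesis .
qed

lemma cut_ns: "Suc t \<le> length ns \<Longrightarrow> (ns ! 0 # drop (Suc t) ns) ! Suc j = ns ! (Suc t + j)"
  by (simp add: nth_drop)
lemma cut_ls: "Suc t \<le> length ls \<Longrightarrow> (Zl # drop (Suc t) ls) ! Suc j = ls ! (Suc t + j)"
  by (simp add: nth_drop)

lemma cw_cut:
  assumes "Suc t \<le> length ns" "Suc t \<le> length ls"
  shows "cw (ns ! 0 # drop (Suc t) ns) (Zl # drop (Suc t) ls) (Suc j) = cw ns ls (Suc t + j)"
proof -
  have a: "(ns ! 0 # drop (Suc t) ns) ! Suc (Suc j) = ns ! Suc (Suc t + j)"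
    using cut_ns[OF assms(1), of "Suc j"] by simp
  show ?thesis unfolding cw_def cut_ns[OF assms(1)] cut_ls[OF assms(2)] add_Suc_right ..
qed

lemma zrow_cut:
  assumes "Suc t \<le> length ns" "Suc t \<le> length ls"
  shows "zrow (ns ! 0 # drop (Suc t) ns) (Zl # drop (Suc t) ls) (Suc j) = zrow ns ls (Suc t + j)"
proof -
  have a: "(ns ! 0 # drop (Suc t) ns) ! Suc (Suc j) = ns ! Suc (Suc t + j)"
    using cut_ns[OF assms(1), of "Suc j"] by simp
  show ?thesis unfolding zrow_def cut_ns[OF assms(1)] cut_ls[OF assms(2)] add_Suc_right ..
qed

lemma cw_Zl: "cw ns (Zl # ls) 0 = 0"
  unfolding cw_def Zl_def by simp

lemma qgrid_0: "qgrid \<sigma> W 0"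
  unfolding qgrid_def Let_def by simp

lemma reduce_depth:
  assumes "\<rho> 0 = 0" "valid_net d ns ls" "quantized \<sigma> W ns ls" "num_weights ns ls \<le> W"
  shows "\<exists>ns' ls'. valid_net d ns' ls' \<and> quantized \<sigma> W ns' ls' \<and> num_weights ns' ls' \<le> W \<and>
           length ls' \<le> W + 2 \<and> (\<forall>x. realize \<rho> ns' ls' x = realize \<rho> ns ls x)"
proof -
  define L where "L = length ls"
  have lens: "length ns = L + 1" "L \<ge> 1" using assms(2) unfolding valid_net_def L_def by auto
  define Zs where "Zs = {t. Suc (Suc t) \<le> L \<and> zrow ns ls t}"
  show ?thesis
  proof (cases "Zs = {}")
    case True
    have "card {..<L-1} \<le> num_weights ns ls"
      by (rule card_nonzero_layers) (use True in \<open>auto simp: Zs_def L_def\<close>)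
    then have "L \<le> W + 2" using assms(4) by simp
    then show ?thesis using assms unfolding L_def by blast
  next
    case False
    have finZ: "finite Zs" by (rule finite_subset[of _ "{..<L}"]) (auto simp: Zs_def)
    define t where "t = Max Zs"
    have tZ: "t \<in> Zs" using finZ False unfolding t_def by simp
    have tmax: "\<And>s. s \<in> Zs \<Longrightarrow> s \<le> t" using finZ unfolding t_def by simp
    have t1: "Suc (Suc t) \<le> L" and t2: "zrow ns ls t" using tZ unfolding Zs_def by auto
    define ns2 where "ns2 = ns ! 0 # drop (Suc t) ns"
    define ls2 where "ls2 = Zl # drop (Suc t) ls"
    have tl1: "Suc t \<le> length ns" "Suc t \<le> length ls" using t1 lens unfolding L_def by auto
    have len2: "length ls2 = L - t" "length ns2 = L - t + 1"
      using t1 lens unfolding ls2_def ns2_def L_def by auto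
    have valid2: "valid_net d ns2 ls2"
    proof -
      have "hd ns2 = d" using assms(2) lens unfolding ns2_def valid_net_def by (cases ns) auto
      moreover have "last ns2 = 1"
        using assms(2) tl1 t1 lens unfolding ns2_def valid_net_def by (simp add: last_drop)
      ultimately show ?thesis using len2 t1 unfolding valid_net_def by auto
    qed
    have quant2: "quantized \<sigma> W ns2 ls2"
      unfolding quantized_def
    proof (intro allI impI)
      fix k assume k: "k < length ls2"
      show "(\<forall>i j. i < ns2 ! Suc k \<and> j < ns2 ! k \<longrightarrow> qgrid \<sigma> W (fst (ls2 ! k) i j)) \<and>
            (\<forall>i. i < ns2 ! Suc k \<longrightarrow> qgrid \<sigma> W (snd (ls2 ! k) i))"
      proof (cases k)
        case 0
        then show ?thesis unfolding ls2_def Zl_def by (simp add: qgrid_0)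
      next
        case (Suc j)
        have a: "ns2 ! Suc (Suc j) = ns ! Suc (Suc t + j)"
          using cut_ns[OF tl1(1), of "Suc j"] unfolding ns2_def by simp
        have b: "Suc t + j < length ls" using k Suc len2 unfolding L_def by simp
        show ?thesis unfolding Suc a using assms(3) b unfolding quantized_def ns2_def ls2_def
          cut_ns[OF tl1(1)] cut_ls[OF tl1(2)] by blast
      qed
    qed
    have nw2: "num_weights ns2 ls2 \<le> num_weights ns ls"
    proof -
      have "num_weights ns2 ls2 = (\<Sum>k<Suc (L - Suc t). cw ns2 ls2 k)"
        unfolding num_weights_cw using len2 t1 by (simp add: Suc_diff_Suc)
      also have "\<dots> = (\<Sum>j<L - Suc t. cw ns ls (Suc t + j))"
        unfolding sum.lessThan_Suc_shift unfolding ns2_def ls2_def cw_Zl cw_cut[OF tl1] by simp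
      also have "\<dots> = (\<Sum>k\<in>(\<lambda>j. Suc t + j) ` {..<L - Suc t}. cw ns ls k)"
        by (subst sum.reindex) (auto simp: inj_on_def)
      also have "\<dots> \<le> (\<Sum>k<L. cw ns ls k)"
        by (intro sum_mono2) auto
      finally show ?thesis unfolding num_weights_cw L_def .
    qed
    have depth2: "L - t \<le> W + 2"
    proof -
      have "card (Suc ` {..<L - t - 2}) \<le> num_weights ns2 ls2"
      proof (rule card_nonzero_layers)
        show "Suc ` {..<L - t - 2} \<subseteq> {..<length ls2}" using len2 by auto
        show "\<forall>s\<in>Suc ` {..<L - t - 2}. \<not> zrow ns2 ls2 s"
        proof
          fix s assume "s \<in> Suc ` {..<L - t - 2}"
          then obtain j where j: "s = Suc j" "j < L - t - 2" by auto
          have "Suc t + j \<notin> Zs" using tmax by fastforce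
          then have "\<not> zrow ns ls (Suc t + j)" using j unfolding Zs_def by auto
          then show "\<not> zrow ns2 ls2 s" unfolding j ns2_def ls2_def zrow_cut[OF tl1] .
        qed
      qed
      then have "L - t - 2 \<le> W" using nw2 assms(4) by (simp add: card_image)
      then show ?thesis by simp
    qed
    have real2: "\<forall>x. realize \<rho> ns2 ls2 x = realize \<rho> ns ls x"
      using realize_cut[of \<rho> ns ls t, OF assms(1) t2] t1 lens unfolding ns2_def ls2_def L_def by simp
    show ?thesis
      using valid2 quant2 nw2 assms(4) depth2 real2 len2 by (intro exI[of _ ns2] exI[of _ ls2]) auto
  qed
qed

definition Kset :: "nat list \<Rightarrow> layer list \<Rightarrow> nat \<Rightarrow> nat set" where
  "Kset ns ls t = (if t = 0 \<or> t = length ls then {..<ns ! t}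
     else {i. i < ns ! t \<and> (snd (ls ! (t - 1)) i \<noteq> 0 \<or> (\<exists>j<ns ! (t - 1). fst (ls ! (t - 1)) i j \<noteq> 0))})"

definition sel :: "nat list \<Rightarrow> layer list \<Rightarrow> nat \<Rightarrow> nat \<Rightarrow> nat" where
  "sel ns ls t r = sorted_list_of_set (Kset ns ls t) ! r"

definition ck :: "nat list \<Rightarrow> layer list \<Rightarrow> nat \<Rightarrow> nat" where
  "ck ns ls t = card (Kset ns ls t)"

definition nns :: "nat list \<Rightarrow> layer list \<Rightarrow> nat list" where
  "nns ns ls = map (ck ns ls) [0..<Suc (length ls)]"

definition nlayer :: "nat list \<Rightarrow> layer list \<Rightarrow> nat \<Rightarrow> layer" where
  "nlayer ns ls t = (\<lambda>r s. if r < ck ns ls (Suc t) \<and> s < ck ns ls t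
        then fst (ls ! t) (sel ns ls (Suc t) r) (sel ns ls t s) else 0,
      \<lambda>r. if r < ck ns ls (Suc t) then snd (ls ! t) (sel ns ls (Suc t) r) else 0)"

definition nls :: "nat list \<Rightarrow> layer list \<Rightarrow> layer list" where
  "nls ns ls = map (nlayer ns ls) [0..<length ls]"

lemma sorted_list_of_set_lessThan: "sorted_list_of_set {..<n} = [0..<n]"
  by (simp add: lessThan_atLeast0)

lemma Kset_sub: "Kset ns ls t \<subseteq> {..<ns ! t}"
  unfolding Kset_def by (auto split: if_splits)

lemma Kset_fin: "finite (Kset ns ls t)"
  by (rule finite_subset[OF Kset_sub]) simp

lemma sel_bij: "bij_betw (sel ns ls t) {..<ck ns ls t} (Kset ns ls t)"
proof -
  have "bij_betw ((!) (sorted_list_of_set (Kset ns ls t))) {..<ck ns ls t} (Kset ns ls t)"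
    by (rule bij_betw_nth) (auto simp: ck_def Kset_fin)
  then show ?thesis unfolding sel_def[abs_def] by simp
qed

lemma sel_in: "r < ck ns ls t \<Longrightarrow> sel ns ls t r \<in> Kset ns ls t"
  using sel_bij[of ns ls t] unfolding bij_betw_def by auto

lemma sel_lt: "r < ck ns ls t \<Longrightarrow> sel ns ls t r < ns ! t"
  using sel_in Kset_sub by fastforce

lemma sel_inj: "inj_on (sel ns ls t) {..<ck ns ls t}"
  using sel_bij[of ns ls t] unfolding bij_betw_def by auto

lemma Kset_full: "t = 0 \<or> t = length ls \<Longrightarrow> Kset ns ls t = {..<ns ! t}"
  unfolding Kset_def by (auto split: if_splits)

lemma ck_full: "t = 0 \<or> t = length ls \<Longrightarrow> ck ns ls t = ns ! t"
  unfolding ck_def using Kset_full by simp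

lemma sel_full: "t = 0 \<or> t = length ls \<Longrightarrow> r < ns ! t \<Longrightarrow> sel ns ls t r = r"
  unfolding sel_def using Kset_full[of t ls ns] by (simp add: sorted_list_of_set_lessThan)

lemma hid_outside:
  assumes "\<rho> 0 = 0" "0 < t" "t < length ls" "i \<notin> Kset ns ls t"
  shows "hid \<rho> ns ls x t i = 0"
proof -
  obtain t' where t': "t = Suc t'" using assms(2) by (cases t) auto
  show ?thesis using assms(1,3,4) unfolding t' Kset_def by (auto simp: act_def Defs.affine_def)
qed

lemma affine_sel:
  assumes "\<rho> 0 = 0" "t < length ls" "r < ck ns ls (Suc t)"
    and y: "\<forall>s<ck ns ls t. y s = hid \<rho> ns ls x t (sel ns ls t s)"
  shows "affine (ck ns ls (Suc t)) (ck ns ls t) (nlayer ns ls t) y r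
       = affine (ns ! Suc t) (ns ! t) (ls ! t) (hid \<rho> ns ls x t) (sel ns ls (Suc t) r)"
proof -
  let ?A = "fst (ls ! t) (sel ns ls (Suc t) r)" and ?h = "hid \<rho> ns ls x t"
  have "(\<Sum>s<ck ns ls t. fst (nlayer ns ls t) r s * y s) = (\<Sum>s<ck ns ls t. ?A (sel ns ls t s) * ?h (sel ns ls t s))"
    using assms(3) y unfolding nlayer_def by (intro sum.cong) auto
  also have "\<dots> = (\<Sum>j\<in>Kset ns ls t. ?A j * ?h j)"
    by (rule sum.reindex_bij_betw[OF sel_bij, of "\<lambda>j. ?A j * ?h j"])
  also have "\<dots> = (\<Sum>j<ns ! t. ?A j * ?h j)"
  proof (cases "t = 0")
    case True then show ?thesis using Kset_full by simp
  next
    case False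
    show ?thesis
      by (rule sum.mono_neutral_left) (use Kset_sub hid_outside[where \<rho>=\<rho>, OF assms(1)] False assms(2) in auto)
  qed
  finally show ?thesis using assms(3) sel_lt[OF assms(3)] unfolding Defs.affine_def nlayer_def by simp
qed

lemma nns_nth: "t \<le> length ls \<Longrightarrow> nns ns ls ! t = ck ns ls t"
  unfolding nns_def by (simp del: upt_Suc)

lemma nls_nth: "t < length ls \<Longrightarrow> nls ns ls ! t = nlayer ns ls t"
  unfolding nls_def by simp

lemma hid_norm:
  assumes "\<rho> 0 = 0" "t < length ls"
  shows "\<forall>r<ck ns ls t. hid \<rho> (nns ns ls) (nls ns ls) x t r = hid \<rho> ns ls x t (sel ns ls t r)"
  using assms(2)
proof (induction t)
  case 0
  then show ?case using sel_full ck_full by auto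
next
  case (Suc t)
  show ?case
  proof (intro allI impI)
    fix r assume r: "r < ck ns ls (Suc t)"
    have IH: "\<forall>s<ck ns ls t. hid \<rho> (nns ns ls) (nls ns ls) x t s = hid \<rho> ns ls x t (sel ns ls t s)"
      using Suc by simp
    have "hid \<rho> (nns ns ls) (nls ns ls) x (Suc t) r =
        act \<rho> (ck ns ls (Suc t)) (ck ns ls t) (nlayer ns ls t) (hid \<rho> (nns ns ls) (nls ns ls) x t) r"
      using Suc.prems by (simp add: nns_nth nls_nth)
    also have "\<dots> = \<rho> (affine (ns ! Suc t) (ns ! t) (ls ! t) (hid \<rho> ns ls x t) (sel ns ls (Suc t) r))"
      using affine_sel[where \<rho>=\<rho>, OF assms(1) _ r IH] Suc.prems r by (simp add: act_def)
    also have "\<dots> = hid \<rho> ns ls x (Suc t) (sel ns ls (Suc t) r)"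
      using sel_lt[OF r] by (simp add: act_def)
    finally show "hid \<rho> (nns ns ls) (nls ns ls) x (Suc t) r = hid \<rho> ns ls x (Suc t) (sel ns ls (Suc t) r)" .
  qed
qed

lemma realize_norm:
  assumes "\<rho> 0 = 0" "length ns = length ls + 1" "length ls \<ge> 1" "ns ! length ls \<ge> 1"
  shows "realize \<rho> (nns ns ls) (nls ns ls) x 0 = realize \<rho> ns ls x 0"
proof -
  define L where "L = length ls"
  have len: "length (nns ns ls) = length (nls ns ls) + 1" "length (nls ns ls) = L"
    unfolding nns_def nls_def L_def by auto
  have L1: "L - 1 < length ls" "Suc (L - 1) = L" using assms(3) unfolding L_def by auto
  have ckL: "ck ns ls L = ns ! L" using ck_full L_def by simp
  have "realize \<rho> (nns ns ls) (nls ns ls) x 0 =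
     affine (ck ns ls (Suc (L - 1))) (ck ns ls (L - 1)) (nlayer ns ls (L - 1)) (hid \<rho> (nns ns ls) (nls ns ls) x (L - 1)) 0"
    using realize_hid[OF len(1)] len(2) assms(3) L1 unfolding L_def
    by (simp add: nns_nth nls_nth)
  also have "\<dots> = affine (ns ! Suc (L - 1)) (ns ! (L - 1)) (ls ! (L - 1)) (hid \<rho> ns ls x (L - 1)) (sel ns ls (Suc (L - 1)) 0)"
    by (rule affine_sel[where \<rho>=\<rho>, OF assms(1) L1(1)]) (use hid_norm[where \<rho>=\<rho>, OF assms(1) L1(1)] L1 ckL assms(4) L_def in auto)
  also have "sel ns ls (Suc (L - 1)) 0 = 0" using sel_full[of L ls 0 ns] L1 assms(4) unfolding L_def by simp
  also have "affine (ns ! Suc (L - 1)) (ns ! (L - 1)) (ls ! (L - 1)) (hid \<rho> ns ls x (L - 1)) 0 = realize \<rho> ns ls x 0"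
    using realize_hid[OF assms(2,3)] L1 unfolding L_def by simp
  finally show ?thesis .
qed

definition canon :: "nat list \<Rightarrow> layer list \<Rightarrow> bool" where
  "canon ns ls \<longleftrightarrow> (\<forall>t<length ls. (\<forall>r s. \<not> (r < ns ! Suc t \<and> s < ns ! t) \<longrightarrow> fst (ls ! t) r s = 0) \<and>
      (\<forall>r. \<not> r < ns ! Suc t \<longrightarrow> snd (ls ! t) r = 0))"

lemma len_nns: "length (nns ns ls) = length ls + 1" unfolding nns_def by simp
lemma len_nls: "length (nls ns ls) = length ls" unfolding nls_def by simp

lemma canon_norm: "canon (nns ns ls) (nls ns ls)"
  unfolding canon_def by (auto simp: len_nls nls_nth nns_nth nlayer_def)

lemma quant_norm:
  assumes "quantized \<sigma> W ns ls"
  shows "quantized \<sigma> W (nns ns ls) (nls ns ls)"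
  unfolding quantized_def
proof (intro allI impI)
  fix t assume t: "t < length (nls ns ls)"
  then have t': "t < length ls" by (simp add: len_nls)
  have q: "\<forall>i j. i < ns ! Suc t \<and> j < ns ! t \<longrightarrow> qgrid \<sigma> W (fst (ls ! t) i j)"
          "\<forall>i. i < ns ! Suc t \<longrightarrow> qgrid \<sigma> W (snd (ls ! t) i)"
    using assms t' unfolding quantized_def by auto
  show "(\<forall>i j. i < nns ns ls ! Suc t \<and> j < nns ns ls ! t \<longrightarrow> qgrid \<sigma> W (fst (nls ns ls ! t) i j)) \<and>
        (\<forall>i. i < nns ns ls ! Suc t \<longrightarrow> qgrid \<sigma> W (snd (nls ns ls ! t) i))"
    using t' q sel_lt by (auto simp: nns_nth nls_nth nlayer_def)
qed

lemma finite_Aset: "finite {(i, j). i < (a::nat) \<and> j < (b::nat) \<and> P i j}"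
  by (rule finite_subset[of _ "{..<a} \<times> {..<b}"]) auto

lemma cw_norm:
  assumes "t < length ls"
  shows "cw (nns ns ls) (nls ns ls) t \<le> cw ns ls t"
proof -
  have e: "nns ns ls ! Suc t = ck ns ls (Suc t)" "nns ns ls ! t = ck ns ls t" "nls ns ls ! t = nlayer ns ls t"
    using assms by (auto simp: nns_nth nls_nth)
  let ?f = "\<lambda>(r, s). (sel ns ls (Suc t) r, sel ns ls t s)"
  have 1: "card {(r, s). r < ck ns ls (Suc t) \<and> s < ck ns ls t \<and> fst (nlayer ns ls t) r s \<noteq> 0}
      \<le> card {(i, j). i < ns ! Suc t \<and> j < ns ! t \<and> fst (ls ! t) i j \<noteq> 0}"
  proof (rule card_inj_on_le[of ?f])
    show "inj_on ?f {(r, s). r < ck ns ls (Suc t) \<and> s < ck ns ls t \<and> fst (nlayer ns ls t) r s \<noteq> 0}"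
      using sel_inj[of ns ls "Suc t"] sel_inj[of ns ls t] unfolding inj_on_def by auto
    show "?f ` {(r, s). r < ck ns ls (Suc t) \<and> s < ck ns ls t \<and> fst (nlayer ns ls t) r s \<noteq> 0}
       \<subseteq> {(i, j). i < ns ! Suc t \<and> j < ns ! t \<and> fst (ls ! t) i j \<noteq> 0}"
      using sel_lt by (auto simp: nlayer_def)
  qed (rule finite_Aset)
  have 2: "card {r. r < ck ns ls (Suc t) \<and> snd (nlayer ns ls t) r \<noteq> 0}
      \<le> card {i. i < ns ! Suc t \<and> snd (ls ! t) i \<noteq> 0}"
  proof (rule card_inj_on_le[of "sel ns ls (Suc t)"])
    show "inj_on (sel ns ls (Suc t)) {r. r < ck ns ls (Suc t) \<and> snd (nlayer ns ls t) r \<noteq> 0}"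
      using sel_inj[of ns ls "Suc t"] unfolding inj_on_def by auto
    show "sel ns ls (Suc t) ` {r. r < ck ns ls (Suc t) \<and> snd (nlayer ns ls t) r \<noteq> 0}
       \<subseteq> {i. i < ns ! Suc t \<and> snd (ls ! t) i \<noteq> 0}"
      using sel_lt by (auto simp: nlayer_def)
  qed auto
  show ?thesis unfolding cw_def e using 1 2 by simp
qed

lemma nw_norm: "num_weights (nns ns ls) (nls ns ls) \<le> num_weights ns ls"
  unfolding num_weights_cw len_nls by (rule sum_mono) (use cw_norm in auto)

lemma ck_le_cw:
  assumes "0 < t" "t < length ls"
  shows "ck ns ls t \<le> cw ns ls (t - 1)"
proof -
  obtain t' where t': "t = Suc t'" using assms(1) by (cases t) auto
  let ?A = "{(i, j). i < ns ! Suc t' \<and> j < ns ! t' \<and> fst (ls ! t') i j \<noteq> 0}"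
  let ?B = "{i. i < ns ! Suc t' \<and> snd (ls ! t') i \<noteq> 0}"
  have "Kset ns ls t \<subseteq> fst ` ?A \<union> ?B" unfolding Kset_def t' using assms by (auto simp: t' image_iff; blast)
  then have "ck ns ls t \<le> card (fst ` ?A \<union> ?B)" unfolding ck_def
    by (intro card_mono) (auto intro: finite_Aset)
  also have "\<dots> \<le> card (fst ` ?A) + card ?B" by (rule card_Un_le)
  also have "\<dots> \<le> card ?A + card ?B" using card_image_le[OF finite_Aset] by simp
  finally show ?thesis unfolding cw_def t' by simp
qed

lemma cw_le_nw: "t < length ls \<Longrightarrow> cw ns ls t \<le> num_weights ns ls"
  unfolding num_weights_cw by (rule member_le_sum) auto

lemma normal_form:
  assumes "\<rho> 0 = 0" "valid_net d ns ls" "quantized \<sigma> W ns ls" "num_weights ns ls \<le> W" and d1: "1 \<le> d"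
  shows "\<exists>ns' ls'. length ls' \<le> W + 2 \<and> length ns' = length ls' + 1 \<and> set ns' \<subseteq> {..d + W} \<and>
     canon ns' ls' \<and> quantized \<sigma> W ns' ls' \<and> num_weights ns' ls' \<le> W \<and>
     (\<forall>x. realize \<rho> ns' ls' x 0 = realize \<rho> ns ls x 0)"
proof -
  obtain ns1 ls1 where 1: "valid_net d ns1 ls1" "quantized \<sigma> W ns1 ls1" "num_weights ns1 ls1 \<le> W"
     "length ls1 \<le> W + 2" "\<forall>x. realize \<rho> ns1 ls1 x = realize \<rho> ns ls x"
    using reduce_depth[where \<rho>=\<rho>, OF assms(1-4)] by blast
  have lens: "length ns1 = length ls1 + 1" "length ls1 \<ge> 1" "hd ns1 = d" "last ns1 = 1"
    using 1(1) unfolding valid_net_def by auto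
  have n0: "ns1 ! 0 = d" using lens by (cases ns1) auto
  have nL: "ns1 ! length ls1 = 1"
  proof -
    have "ns1 \<noteq> []" using lens by auto
    then have "last ns1 = ns1 ! (length ns1 - 1)" by (rule last_conv_nth)
    then show ?thesis using lens by simp
  qed
  have widths: "set (nns ns1 ls1) \<subseteq> {..d + W}"
  proof
    fix w assume "w \<in> set (nns ns1 ls1)"
    then obtain t where t: "t \<le> length ls1" "w = ck ns1 ls1 t" unfolding nns_def by (auto simp del: upt_Suc simp: less_Suc_eq_le)
    show "w \<in> {..d + W}"
    proof (cases "t = 0 \<or> t = length ls1")
      case True
      then show ?thesis using t ck_full[OF True] n0 nL lens d1 by auto
    next
      case False
      then have "w \<le> cw ns1 ls1 (t - 1)" using t ck_le_cw by auto
      also have "\<dots> \<le> num_weights ns1 ls1" using cw_le_nw t False by auto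
      finally show ?thesis using 1(3) by simp
    qed
  qed
  show ?thesis
    apply (intro exI[of _ "nns ns1 ls1"] exI[of _ "nls ns1 ls1"])
    using 1 widths canon_norm quant_norm[OF 1(2)] nw_norm[of ns1 ls1]
      realize_norm[where \<rho>=\<rho>, OF assms(1) lens(1,2)] nL
    by (auto simp: len_nns len_nls)
qed

definition kW :: "nat \<Rightarrow> nat" where "kW W = nat \<lceil>log 2 (real W)\<rceil>"

lemma qgrid_alt: "qgrid \<sigma> W a \<longleftrightarrow> \<bar>a\<bar> \<le> real W ^ (\<sigma> * kW W) \<and> a * 2 ^ (\<sigma> * (kW W)\<^sup>2) \<in> \<int>"
  unfolding qgrid_def kW_def Let_def ..

lemma kW_mono: "1 \<le> W' \<Longrightarrow> W' \<le> W \<Longrightarrow> kW W' \<le> kW W"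
  unfolding kW_def by (intro nat_mono ceiling_mono) auto

lemma qgrid_mono:
  assumes "1 \<le> W'" "W' \<le> W" "qgrid \<sigma> W' a"
  shows "qgrid \<sigma> W a"
proof -
  have k: "kW W' \<le> kW W" by (rule kW_mono[OF assms(1,2)])
  have "\<bar>a\<bar> \<le> real W' ^ (\<sigma> * kW W')" using assms(3) unfolding qgrid_alt by simp
  also have "\<dots> \<le> real W ^ (\<sigma> * kW W')" using assms(2) by (intro power_mono) auto
  also have "\<dots> \<le> real W ^ (\<sigma> * kW W)" using assms(1,2) k by (intro power_increasing) auto
  finally have 1: "\<bar>a\<bar> \<le> real W ^ (\<sigma> * kW W)" .
  have e: "\<sigma> * (kW W)\<^sup>2 = \<sigma> * (kW W')\<^sup>2 + (\<sigma> * (kW W)\<^sup>2 - \<sigma> * (kW W')\<^sup>2)"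
    using k by (simp add: power_mono)
  have "a * 2 ^ (\<sigma> * (kW W)\<^sup>2) = (a * 2 ^ (\<sigma> * (kW W')\<^sup>2)) * 2 ^ (\<sigma> * (kW W)\<^sup>2 - \<sigma> * (kW W')\<^sup>2)"
    by (subst e, subst power_add) simp
  also have "\<dots> \<in> \<int>" by (rule Ints_mult) (use assms(3) in \<open>auto simp: qgrid_alt\<close>)
  finally show ?thesis using 1 unfolding qgrid_alt by simp
qed

lemma quantized_mono:
  assumes "1 \<le> W'" "W' \<le> W" "quantized \<sigma> W' ns ls"
  shows "quantized \<sigma> W ns ls"
  using assms(3) qgrid_mono[OF assms(1,2)] unfolding quantized_def by blast

definition Nn :: "nat \<Rightarrow> nat \<Rightarrow> nat" where "Nn \<sigma> W = W ^ (\<sigma> * kW W) * 2 ^ (\<sigma> * (kW W)\<^sup>2)"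

definition G :: "nat \<Rightarrow> nat \<Rightarrow> real set" where "G \<sigma> W = {a. qgrid \<sigma> W a}"

lemma G_sub: "G \<sigma> W \<subseteq> (\<lambda>z. real_of_int z / 2 ^ (\<sigma> * (kW W)\<^sup>2)) ` {- int (Nn \<sigma> W)..int (Nn \<sigma> W)}"
proof
  fix a assume "a \<in> G \<sigma> W"
  then have a: "\<bar>a\<bar> \<le> real W ^ (\<sigma> * kW W)" "a * 2 ^ (\<sigma> * (kW W)\<^sup>2) \<in> \<int>"
    unfolding G_def qgrid_alt by auto
  obtain z where z: "a * 2 ^ (\<sigma> * (kW W)\<^sup>2) = real_of_int z" using a(2) Ints_cases by blast
  have "\<bar>real_of_int z\<bar> = \<bar>a\<bar> * 2 ^ (\<sigma> * (kW W)\<^sup>2)" unfolding z[symmetric] by (simp add: abs_mult)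
  also have "\<dots> \<le> real W ^ (\<sigma> * kW W) * 2 ^ (\<sigma> * (kW W)\<^sup>2)" using a(1) by (intro mult_right_mono) auto
  also have "\<dots> = real (Nn \<sigma> W)" unfolding Nn_def by simp
  finally have "\<bar>z\<bar> \<le> int (Nn \<sigma> W)" by linarith
  moreover have "a = real_of_int z / 2 ^ (\<sigma> * (kW W)\<^sup>2)" using z by (simp add: field_simps)
  ultimately show "a \<in> (\<lambda>z. real_of_int z / 2 ^ (\<sigma> * (kW W)\<^sup>2)) ` {- int (Nn \<sigma> W)..int (Nn \<sigma> W)}"
    by (intro image_eqI[where x=z]) auto
qed

lemma G_fin: "finite (G \<sigma> W)"
  using G_sub finite_subset by blast

lemma G_card: "card (G \<sigma> W) \<le> 2 * Nn \<sigma> W + 1"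
proof -
  have "card (G \<sigma> W) \<le> card ((\<lambda>z. real_of_int z / 2 ^ (\<sigma> * (kW W)\<^sup>2)) ` {- int (Nn \<sigma> W)..int (Nn \<sigma> W)})"
    by (rule card_mono[OF _ G_sub]) simp
  also have "\<dots> \<le> card {- int (Nn \<sigma> W)..int (Nn \<sigma> W)}" by (rule card_image_le) simp
  also have "\<dots> = 2 * Nn \<sigma> W + 1" by simp
  finally show ?thesis .
qed

lemma card_small_subsets:
  assumes "finite U"
  shows "card {A. A \<subseteq> U \<and> card A \<le> W} \<le> (card U + 1) ^ W"
proof -
  have "{A. A \<subseteq> U \<and> card A \<le> W} = (\<Union>s\<le>W. {A. A \<subseteq> U \<and> card A = s})" by auto
  then have "card {A. A \<subseteq> U \<and> card A \<le> W} \<le> (\<Sum>s\<le>W. card {A. A \<subseteq> U \<and> card A = s})"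
    using card_UN_le[of "{..W}" "\<lambda>s. {A. A \<subseteq> U \<and> card A = s}"] by simp
  also have "\<dots> = (\<Sum>s\<le>W. card U choose s)" using n_subsets[OF assms] by simp
  also have "\<dots> \<le> (\<Sum>s\<le>W. (W choose s) * card U ^ s)"
  proof (rule sum_mono)
    fix s assume "s \<in> {..W}"
    then have "W choose s \<ge> 1" by (simp add: Suc_leI)
    then have "card U ^ s \<le> (W choose s) * card U ^ s" by simp
    moreover have "card U choose s \<le> card U ^ s"
      by (cases "s \<le> card U") (auto simp: binomial_le_pow binomial_eq_0)
    ultimately show "card U choose s \<le> (W choose s) * card U ^ s" by linarith
  qed
  also have "\<dots> = (card U + 1) ^ W" using binomial_ring[of "card U" 1 W] by simp
  finally show ?thesis .
qed

definition CN :: "nat \<Rightarrow> nat \<Rightarrow> nat \<Rightarrow> (nat list \<times> layer list) set" where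
  "CN \<sigma> d W = {(ns, ls). length ls \<le> W + 2 \<and> length ns = length ls + 1 \<and> set ns \<subseteq> {..d + W} \<and>
      canon ns ls \<and> quantized \<sigma> W ns ls \<and> num_weights ns ls \<le> W}"

definition ent :: "nat list \<Rightarrow> layer list \<Rightarrow> (nat \<times> nat \<times> nat option \<times> real) set" where
  "ent ns ls = (\<Union>t<length ls.
     (\<lambda>(i, j). (t, i, Some j, fst (ls ! t) i j)) ` {(i, j). i < ns ! Suc t \<and> j < ns ! t \<and> fst (ls ! t) i j \<noteq> 0}
     \<union> (\<lambda>i. (t, i, None, snd (ls ! t) i)) ` {i. i < ns ! Suc t \<and> snd (ls ! t) i \<noteq> 0})"

lemma ent_Some: "(t, i, Some j, v) \<in> ent ns ls \<longleftrightarrow>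
   t < length ls \<and> i < ns ! Suc t \<and> j < ns ! t \<and> fst (ls ! t) i j \<noteq> 0 \<and> v = fst (ls ! t) i j"
  unfolding ent_def by auto

lemma ent_None: "(t, i, None, v) \<in> ent ns ls \<longleftrightarrow>
   t < length ls \<and> i < ns ! Suc t \<and> snd (ls ! t) i \<noteq> 0 \<and> v = snd (ls ! t) i"
  unfolding ent_def by auto

lemma card_ent: "card (ent ns ls) \<le> num_weights ns ls"
proof -
  let ?E = "\<lambda>t. (\<lambda>(i, j). (t, i, Some j, fst (ls ! t) i j)) ` {(i, j). i < ns ! Suc t \<and> j < ns ! t \<and> fst (ls ! t) i j \<noteq> 0}"
  let ?F = "\<lambda>t. (\<lambda>i. (t, i, None :: nat option, snd (ls ! t) i)) ` {i. i < ns ! Suc t \<and> snd (ls ! t) i \<noteq> 0}"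
  have "card (ent ns ls) \<le> (\<Sum>t<length ls. card (?E t \<union> ?F t))"
    unfolding ent_def by (rule card_UN_le) simp
  also have "\<dots> \<le> (\<Sum>t<length ls. cw ns ls t)"
  proof (rule sum_mono)
    fix t
    have "card (?E t \<union> ?F t) \<le> card (?E t) + card (?F t)" by (rule card_Un_le)
    also have "\<dots> \<le> cw ns ls t" unfolding cw_def
      by (intro add_mono card_image_le) (auto intro: finite_Aset)
    finally show "card (?E t \<union> ?F t) \<le> cw ns ls t" .
  qed
  finally show ?thesis unfolding num_weights_cw .
qed

lemma ent_inj:
  assumes "canon ns ls1" "canon ns ls2" "length ls1 = length ls2" "ent ns ls1 = ent ns ls2"
  shows "ls1 = ls2"
proof (rule nth_equalityI[OF assms(3)])
  fix t assume t: "t < length ls1"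
  have A: "fst (ls1 ! t) = fst (ls2 ! t)"
  proof (intro ext)
    fix i j
    show "fst (ls1 ! t) i j = fst (ls2 ! t) i j"
    proof (cases "i < ns ! Suc t \<and> j < ns ! t")
      case True
      show ?thesis
      proof (rule ccontr)
        assume ne: "fst (ls1 ! t) i j \<noteq> fst (ls2 ! t) i j"
        show False
        proof (cases "fst (ls1 ! t) i j = 0")
          case True
          then have "(t, i, Some j, fst (ls2 ! t) i j) \<in> ent ns ls2"
            using ne t assms(3) \<open>i < ns ! Suc t \<and> j < ns ! t\<close> by (simp add: ent_Some)
          then have "(t, i, Some j, fst (ls2 ! t) i j) \<in> ent ns ls1" using assms(4) by simp
          then show False using ne by (simp add: ent_Some)
        next
          case False
          then have "(t, i, Some j, fst (ls1 ! t) i j) \<in> ent ns ls1"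
            using t \<open>i < ns ! Suc t \<and> j < ns ! t\<close> by (simp add: ent_Some)
          then have "(t, i, Some j, fst (ls1 ! t) i j) \<in> ent ns ls2" using assms(4) by simp
          then show False using ne by (simp add: ent_Some)
        qed
      qed
    next
      case False
      then show ?thesis using assms(1,2,3) t unfolding canon_def by auto
    qed
  qed
  have B: "snd (ls1 ! t) = snd (ls2 ! t)"
  proof (intro ext)
    fix i
    show "snd (ls1 ! t) i = snd (ls2 ! t) i"
    proof (cases "i < ns ! Suc t")
      case True
      show ?thesis
      proof (rule ccontr)
        assume ne: "snd (ls1 ! t) i \<noteq> snd (ls2 ! t) i"
        show False
        proof (cases "snd (ls1 ! t) i = 0")
          case True
          then have "(t, i, None, snd (ls2 ! t) i) \<in> ent ns ls2"
            using ne t assms(3) \<open>i < ns ! Suc t\<close> by (simp add: ent_None)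
          then have "(t, i, None, snd (ls2 ! t) i) \<in> ent ns ls1" using assms(4) by simp
          then show False using ne by (simp add: ent_None)
        next
          case False
          then have "(t, i, None, snd (ls1 ! t) i) \<in> ent ns ls1"
            using t \<open>i < ns ! Suc t\<close> by (simp add: ent_None)
          then have "(t, i, None, snd (ls1 ! t) i) \<in> ent ns ls2" using assms(4) by simp
          then show False using ne by (simp add: ent_None)
        qed
      qed
    next
      case False
      then show ?thesis using assms(1,2,3) t unfolding canon_def by auto
    qed
  qed
  show "ls1 ! t = ls2 ! t" using A B by (simp add: prod_eq_iff)
qed

definition UU :: "nat \<Rightarrow> nat \<Rightarrow> nat \<Rightarrow> (nat \<times> nat \<times> nat option \<times> real) set" where
  "UU \<sigma> d W = {..<W + 2} \<times> {..<d + W + 1} \<times> insert None (Some ` {..<d + W + 1}) \<times> G \<sigma> W"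

lemma UU_fin: "finite (UU \<sigma> d W)"
  unfolding UU_def using G_fin by auto

lemma UU_card: "card (UU \<sigma> d W) \<le> (W + 2) * (d + W + 1) * (d + W + 2) * (2 * Nn \<sigma> W + 1)"
proof -
  have "card (insert None (Some ` {..<d + W + 1})) = d + W + 2"
    by (subst card_insert_disjoint) (auto simp: card_image)
  then have "card (UU \<sigma> d W) = (W + 2) * ((d + W + 1) * ((d + W + 2) * card (G \<sigma> W)))"
    unfolding UU_def by (simp add: card_cartesian_product)
  also have "\<dots> \<le> (W + 2) * ((d + W + 1) * ((d + W + 2) * (2 * Nn \<sigma> W + 1)))"
    using G_card by (intro mult_le_mono2) auto
  finally show ?thesis by (simp only: mult.assoc)
qed

lemma ent_sub:
  assumes "(ns, ls) \<in> CN \<sigma> d W"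
  shows "ent ns ls \<subseteq> UU \<sigma> d W"
proof
  fix e assume e: "e \<in> ent ns ls"
  have L: "length ls \<le> W + 2" "length ns = length ls + 1" "set ns \<subseteq> {..d + W}" "quantized \<sigma> W ns ls"
    using assms unfolding CN_def by auto
  have w: "\<And>t. t \<le> length ls \<Longrightarrow> ns ! t \<le> d + W" using L(2,3) by (auto simp: subset_iff)
  from e obtain t where t: "t < length ls" and
    "e \<in> (\<lambda>(i, j). (t, i, Some j, fst (ls ! t) i j)) ` {(i, j). i < ns ! Suc t \<and> j < ns ! t \<and> fst (ls ! t) i j \<noteq> 0}
     \<union> (\<lambda>i. (t, i, None, snd (ls ! t) i)) ` {i. i < ns ! Suc t \<and> snd (ls ! t) i \<noteq> 0}"
    unfolding ent_def by blast
  moreover have "ns ! Suc t \<le> d + W" "ns ! t \<le> d + W" using w t by auto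
  moreover have "\<forall>i j. i < ns ! Suc t \<and> j < ns ! t \<longrightarrow> qgrid \<sigma> W (fst (ls ! t) i j)"
     "\<forall>i. i < ns ! Suc t \<longrightarrow> qgrid \<sigma> W (snd (ls ! t) i)"
    using L(4) t unfolding quantized_def by auto
  ultimately show "e \<in> UU \<sigma> d W" using L(1)
    unfolding UU_def G_def by auto
qed

definition Lists :: "nat \<Rightarrow> nat \<Rightarrow> nat list set" where
  "Lists d W = {xs. set xs \<subseteq> {..d + W} \<and> length xs \<le> W + 3}"

definition Subs :: "nat \<Rightarrow> nat \<Rightarrow> nat \<Rightarrow> (nat \<times> nat \<times> nat option \<times> real) set set" where
  "Subs \<sigma> d W = {A. A \<subseteq> UU \<sigma> d W \<and> card A \<le> W}"

lemma CN_card: "finite (CN \<sigma> d W) \<and> card (CN \<sigma> d W) \<le> card (Lists d W) * card (Subs \<sigma> d W)"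
proof -
  let ?f = "\<lambda>(ns, ls). (ns, ent ns ls)"
  have inj: "inj_on ?f (CN \<sigma> d W)"
  proof (rule inj_onI)
    fix x y assume x: "x \<in> CN \<sigma> d W" and y: "y \<in> CN \<sigma> d W" and e: "?f x = ?f y"
    obtain ns1 ls1 where x': "x = (ns1, ls1)" by (cases x)
    obtain ns2 ls2 where y': "y = (ns2, ls2)" by (cases y)
    have "ns1 = ns2" "ent ns1 ls1 = ent ns1 ls2" using e unfolding x' y' by auto
    moreover have "canon ns1 ls1" "length ns1 = length ls1 + 1" using x unfolding x' CN_def by auto
    moreover have "canon ns2 ls2" "length ns2 = length ls2 + 1" using y unfolding y' CN_def by auto
    ultimately have "ls1 = ls2" using ent_inj[of ns1 ls1 ls2] by auto
    then show "x = y" using \<open>ns1 = ns2\<close> unfolding x' y' by simp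
  qed
  have sub: "?f ` CN \<sigma> d W \<subseteq> Lists d W \<times> Subs \<sigma> d W"
  proof
    fix z assume "z \<in> ?f ` CN \<sigma> d W"
    then obtain ns ls where m: "(ns, ls) \<in> CN \<sigma> d W" "z = (ns, ent ns ls)" by auto
    have "ns \<in> Lists d W" using m(1) unfolding CN_def Lists_def by auto
    moreover have "ent ns ls \<in> Subs \<sigma> d W"
      using ent_sub[OF m(1)] card_ent[of ns ls] m(1) unfolding Subs_def CN_def by auto
    ultimately show "z \<in> Lists d W \<times> Subs \<sigma> d W" using m(2) by simp
  qed
  have finL: "finite (Lists d W)" unfolding Lists_def
    by (rule finite_lists_length_le) simp
  have finS: "finite (Subs \<sigma> d W)" unfolding Subs_def
    by (rule finite_subset[of _ "Pow (UU \<sigma> d W)"]) (use UU_fin in auto)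
  have fin: "finite (Lists d W \<times> Subs \<sigma> d W)" using finL finS by simp
  have "finite (CN \<sigma> d W)" by (rule finite_imageD[OF finite_subset[OF sub fin] inj])
  moreover have "card (CN \<sigma> d W) \<le> card (Lists d W \<times> Subs \<sigma> d W)"
    by (rule card_inj_on_le[OF inj sub fin])
  ultimately show ?thesis by (simp add: card_cartesian_product)
qed

definition Bnd :: "nat \<Rightarrow> nat \<Rightarrow> nat \<Rightarrow> nat" where
  "Bnd \<sigma> d W = (\<Sum>i\<le>W + 3. (d + W + 1) ^ i) * ((W + 2) * (d + W + 1) * (d + W + 2) * (2 * Nn \<sigma> W + 1) + 1) ^ W"

lemma CN_Bnd: "finite (CN \<sigma> d W) \<and> card (CN \<sigma> d W) \<le> Bnd \<sigma> d W"
proof -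
  have "card (Lists d W) = (\<Sum>i\<le>W + 3. (d + W + 1) ^ i)"
    unfolding Lists_def by (subst card_lists_length_le) auto
  moreover have sb: "card (Subs \<sigma> d W) \<le> ((W + 2) * (d + W + 1) * (d + W + 2) * (2 * Nn \<sigma> W + 1) + 1) ^ W"
  proof -
    have "card (Subs \<sigma> d W) \<le> (card (UU \<sigma> d W) + 1) ^ W"
      unfolding Subs_def by (rule card_small_subsets[OF UU_fin])
    also have "\<dots> \<le> ((W + 2) * (d + W + 1) * (d + W + 2) * (2 * Nn \<sigma> W + 1) + 1) ^ W"
      using UU_card by (intro power_mono) auto
    finally show ?thesis .
  qed
  ultimately have "card (Lists d W) * card (Subs \<sigma> d W) \<le> Bnd \<sigma> d W"
    unfolding Bnd_def by (simp only: mult_le_mono2)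
  then show ?thesis using CN_card[of \<sigma> d W] by linarith
qed

definition Real :: "(real \<Rightarrow> real) \<Rightarrow> nat \<Rightarrow> nat \<Rightarrow> nat \<Rightarrow> ((nat \<Rightarrow> real) \<Rightarrow> real) set" where
  "Real \<rho> \<sigma> d W = (\<lambda>(ns, ls). (\<lambda>x. realize \<rho> ns ls x 0)) ` CN \<sigma> d W"

lemma Real_Bnd: "finite (Real \<rho> \<sigma> d W) \<and> card (Real \<rho> \<sigma> d W) \<le> Bnd \<sigma> d W"
proof -
  have "card (Real \<rho> \<sigma> d W) \<le> card (CN \<sigma> d W)" unfolding Real_def
    by (rule card_image_le) (use CN_Bnd in blast)
  then show ?thesis using CN_Bnd[of \<sigma> d W] unfolding Real_def by auto
qed

lemma NN_sub_Real:
  assumes "\<rho> 0 = 0" "1 \<le> d" "1 \<le> W'" "W' \<le> W"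
  shows "NN \<sigma> \<rho> d W' \<subseteq> Real \<rho> \<sigma> d W"
proof
  fix g assume "g \<in> NN \<sigma> \<rho> d W'"
  then obtain ns ls where g: "g = (\<lambda>x. realize \<rho> ns ls x 0)" "valid_net d ns ls" "quantized \<sigma> W' ns ls"
    "num_weights ns ls \<le> W'" unfolding NN_def by blast
  obtain ns' ls' where n: "length ls' \<le> W' + 2" "length ns' = length ls' + 1" "set ns' \<subseteq> {..d + W'}"
     "canon ns' ls'" "quantized \<sigma> W' ns' ls'" "num_weights ns' ls' \<le> W'"
     "\<forall>x. realize \<rho> ns' ls' x 0 = realize \<rho> ns ls x 0"
    using normal_form[where \<rho>=\<rho>, OF assms(1) g(2,3,4) assms(2)] by blast
  have "(ns', ls') \<in> CN \<sigma> d W"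
    using n assms(3,4) quantized_mono[OF assms(3,4) n(5)] unfolding CN_def by auto
  moreover have "g = (\<lambda>x. realize \<rho> ns' ls' x 0)" using n(7) g(1) by simp
  ultimately show "g \<in> Real \<rho> \<sigma> d W" unfolding Real_def by force
qed

lemma W_le_pow_k: assumes "1 \<le> W" shows "W \<le> 2 ^ kW W"
proof -
  have l: "log 2 (real W) \<ge> 0" using assms by simp
  have kk: "log 2 (real W) \<le> real (kW W)"
  proof -
    have "0 \<le> \<lceil>log 2 (real W)\<rceil>" using l by simp
    then have "real (kW W) = of_int \<lceil>log 2 (real W)\<rceil>" unfolding kW_def by simp
    then show ?thesis by simp
  qed
  have "real W = 2 powr (log 2 (real W))" using assms by simp
  also have "\<dots> \<le> 2 powr (real (kW W))" using kk by (intro powr_mono) auto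
  also have "\<dots> = 2 ^ kW W" by (simp add: powr_realpow)
  finally show ?thesis by (simp add: of_nat_le_iff[symmetric] del: of_nat_le_iff)
qed

lemma k_le_log: assumes "1 \<le> W" shows "real (kW W) \<le> log 2 (real W) + 1"
proof -
  have l: "log 2 (real W) \<ge> 0" using assms by simp
  have "0 \<le> \<lceil>log 2 (real W)\<rceil>" using l by simp
  then have "real (kW W) = of_int \<lceil>log 2 (real W)\<rceil>" unfolding kW_def by simp
  then show ?thesis by linarith
qed

lemma Nn_le: assumes "1 \<le> W" shows "Nn \<sigma> W \<le> 4 ^ (\<sigma> * (kW W)\<^sup>2)"
proof -
  have "W ^ (\<sigma> * kW W) \<le> (2 ^ kW W) ^ (\<sigma> * kW W)" using W_le_pow_k[OF assms] by (rule power_mono) simp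
  also have "\<dots> = 2 ^ (\<sigma> * (kW W)\<^sup>2)" by (simp add: power_mult[symmetric] power2_eq_square ac_simps)
  finally have "Nn \<sigma> W \<le> 2 ^ (\<sigma> * (kW W)\<^sup>2) * 2 ^ (\<sigma> * (kW W)\<^sup>2)" unfolding Nn_def by simp
  also have "\<dots> = 4 ^ (\<sigma> * (kW W)\<^sup>2)" by (simp add: power_mult_distrib[symmetric])
  finally show ?thesis .
qed

lemma Bnd_le:
  fixes d W :: nat
  assumes "1 \<le> W"
  defines "X \<equiv> d + W + 4"
  shows "1 + Bnd \<sigma> d W \<le> 2 * X ^ X * (X ^ 3 * 4 ^ (\<sigma> * (kW W)\<^sup>2 + 1)) ^ W"
proof -
  have X1: "1 \<le> X" unfolding X_def by simp
  have "(\<Sum>i\<le>W + 3. (d + W + 1) ^ i) \<le> of_nat (card {..W + 3}) * X ^ (W + 3)"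
  proof (rule sum_bounded_above)
    fix i assume "i \<in> {..W + 3}"
    then have "(d + W + 1) ^ i \<le> X ^ i" unfolding X_def by (intro power_mono) auto
    also have "\<dots> \<le> X ^ (W + 3)" using X1 \<open>i \<in> {..W+3}\<close> by (intro power_increasing) auto
    finally show "(d + W + 1) ^ i \<le> X ^ (W + 3)" .
  qed
  also have "\<dots> \<le> X * X ^ (W + 3)" unfolding X_def by (intro mult_right_mono) auto
  also have "\<dots> = X ^ (W + 4)"
  proof -
    have "W + 4 = Suc (W + 3)" by simp
    then show ?thesis by (simp only: power_Suc)
  qed
  also have "\<dots> \<le> X ^ X" using X1 unfolding X_def by (intro power_increasing) auto
  finally have a: "(\<Sum>i\<le>W + 3. (d + W + 1) ^ i) \<le> X ^ X" .
  define P where "P = (W + 2) * (d + W + 1) * (d + W + 2)"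
  define e where "e = \<sigma> * (kW W)\<^sup>2"
  have P1: "1 \<le> P" unfolding P_def by simp
  have PX: "P \<le> X ^ 3" unfolding P_def X_def power3_eq_cube
    by (intro mult_le_mono) auto
  have N: "2 * Nn \<sigma> W + 2 \<le> 4 * 4 ^ e"
  proof -
    have "(1::nat) \<le> 4 ^ e" by (simp add: one_le_power)
    then show ?thesis using Nn_le[OF assms(1), of \<sigma>] unfolding e_def by linarith
  qed
  have "P * (2 * Nn \<sigma> W + 1) + 1 \<le> P * (2 * Nn \<sigma> W + 2)" using P1 by simp
  also have "\<dots> \<le> X ^ 3 * (4 * 4 ^ e)" using PX N by (rule mult_le_mono)
  also have "\<dots> = X ^ 3 * 4 ^ (e + 1)" by simp
  finally have b: "P * (2 * Nn \<sigma> W + 1) + 1 \<le> X ^ 3 * 4 ^ (e + 1)" .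
  have "Bnd \<sigma> d W \<le> X ^ X * (X ^ 3 * 4 ^ (e + 1)) ^ W"
    unfolding Bnd_def P_def[symmetric]
    using a b by (intro mult_le_mono power_mono) (auto simp: P_def)
  moreover have "1 \<le> X ^ X * (X ^ 3 * 4 ^ (e + 1)) ^ W" using X1
    by (simp add: one_le_power)
  ultimately show ?thesis unfolding e_def by linarith
qed

definition FF :: "nat \<Rightarrow> real \<Rightarrow> real" where
  "FF \<sigma> x = ln 2 + x * ln x + x * (3 * ln x + (real \<sigma> * (log 2 x + 1)\<^sup>2 + 1) * ln 4)"

lemma ln_Bnd:
  assumes "1 \<le> W"
  shows "ln (real (1 + Bnd \<sigma> d W)) \<le> FF \<sigma> (real (d + W + 4))"
proof -
  define X where "X = d + W + 4"
  define e where "e = \<sigma> * (kW W)\<^sup>2 + 1"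
  have X1: "real X \<ge> 1" unfolding X_def by simp
  have pos: "0 < real (1 + Bnd \<sigma> d W)" by simp
  have "ln (real (1 + Bnd \<sigma> d W)) \<le> ln (real (2 * X ^ X * (X ^ 3 * 4 ^ e) ^ W))"
    using Bnd_le[OF assms, where d=d and \<sigma>=\<sigma>] pos unfolding X_def e_def
    by (subst ln_le_cancel_iff) (auto simp del: of_nat_add of_nat_mult of_nat_power)
  also have "real (2 * X ^ X * (X ^ 3 * 4 ^ e) ^ W) = 2 * real X ^ X * (real X ^ 3 * 4 ^ e) ^ W" by simp
  also have "ln \<dots> = ln 2 + real X * ln (real X) + real W * (3 * ln (real X) + real e * ln 4)"
    using X1 by (simp add: ln_mult ln_realpow)
  also have "\<dots> \<le> FF \<sigma> (real X)"
  proof -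
    have lx: "0 \<le> ln (real X)" using X1 by simp
    have k0: "0 \<le> real (kW W)" by simp
    have "real (kW W) \<le> log 2 (real W) + 1" by (rule k_le_log[OF assms])
    also have "\<dots> \<le> log 2 (real X) + 1" using assms unfolding X_def by simp
    finally have kX: "real (kW W) \<le> log 2 (real X) + 1" .
    have "real e = real \<sigma> * (real (kW W))\<^sup>2 + 1" unfolding e_def by simp
    also have "\<dots> \<le> real \<sigma> * (log 2 (real X) + 1)\<^sup>2 + 1"
      using kX k0 by (intro add_mono mult_left_mono power_mono) auto
    finally have eX: "real e \<le> real \<sigma> * (log 2 (real X) + 1)\<^sup>2 + 1" .
    have "3 * ln (real X) + real e * ln 4 \<le> 3 * ln (real X) + (real \<sigma> * (log 2 (real X) + 1)\<^sup>2 + 1) * ln 4"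
      using eX by (intro add_left_mono mult_right_mono) auto
    moreover have "0 \<le> 3 * ln (real X) + real e * ln 4" using lx by simp
    moreover have "real W \<le> real X" unfolding X_def by simp
    ultimately have "real W * (3 * ln (real X) + real e * ln 4)
       \<le> real X * (3 * ln (real X) + (real \<sigma> * (log 2 (real X) + 1)\<^sup>2 + 1) * ln 4)"
      by (intro mult_mono) auto
    then show ?thesis unfolding FF_def by simp
  qed
  finally show ?thesis unfolding X_def .
qed

lemma FF_mono:
  assumes "1 \<le> x" "x \<le> y"
  shows "FF \<sigma> x \<le> FF \<sigma> y"
proof -
  have lx: "0 \<le> ln x" "ln x \<le> ln y" using assms by auto
  have l2: "0 \<le> log 2 x + 1" "log 2 x + 1 \<le> log 2 y + 1" using assms by auto
  have a: "x * ln x \<le> y * ln y" using assms lx by (intro mult_mono) auto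
  have s: "(real \<sigma> * (log 2 x + 1)\<^sup>2 + 1) * ln 4 \<le> (real \<sigma> * (log 2 y + 1)\<^sup>2 + 1) * ln 4"
    using l2 by (intro mult_right_mono add_right_mono mult_left_mono power_mono) auto
  have "3 * ln x + (real \<sigma> * (log 2 x + 1)\<^sup>2 + 1) * ln 4 \<le> 3 * ln y + (real \<sigma> * (log 2 y + 1)\<^sup>2 + 1) * ln 4"
    using lx s by linarith
  moreover have "0 \<le> 3 * ln x + (real \<sigma> * (log 2 x + 1)\<^sup>2 + 1) * ln 4" using lx by simp
  ultimately have b: "x * (3 * ln x + (real \<sigma> * (log 2 x + 1)\<^sup>2 + 1) * ln 4)
      \<le> y * (3 * ln y + (real \<sigma> * (log 2 y + 1)\<^sup>2 + 1) * ln 4)" using assms by (intro mult_mono) auto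
  show ?thesis unfolding FF_def using a b by simp
qed

lemma FF_asymp:
  assumes "0 < \<eta>" "\<eta> < 1"
  shows "eventually (\<lambda>R::real. FF \<sigma> (R powr (1 - \<eta>) + real d + 5) \<le> R * ln 2) at_top"
proof -
  have "((\<lambda>R::real. FF \<sigma> (R powr (1 - \<eta>) + real d + 5) / R) \<longlongrightarrow> 0) at_top"
    unfolding FF_def log_def using assms by real_asymp
  then have "eventually (\<lambda>R::real. FF \<sigma> (R powr (1 - \<eta>) + real d + 5) / R < ln 2) at_top"
    by (rule order_tendstoD) simp
  moreover have "eventually (\<lambda>R::real. R > 0) at_top" by (rule eventually_gt_at_top)
  ultimately show ?thesis
    by eventually_elim (auto simp: divide_less_eq mult.commute)
qed

lemma comp_meas: "(\<lambda>y::nat\<Rightarrow>real. y i) \<in> borel_measurable (lebOm d \<Omega>)"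
proof -
  have "(\<lambda>y::nat\<Rightarrow>real. y i) \<in> borel_measurable (lebd d)"
  proof (cases "i < d")
    case True
    have "(\<lambda>y::nat\<Rightarrow>real. y i) \<in> measurable (lebd d) lborel"
      unfolding lebd_def by (rule measurable_component_singleton) (use True in auto)
    then show ?thesis by simp
  next
    case False
    have "(\<lambda>y::nat\<Rightarrow>real. undefined :: real) \<in> borel_measurable (lebd d)" by simp
    moreover have "\<And>y. y \<in> space (lebd d) \<Longrightarrow> y i = undefined"
      using False unfolding lebd_def by (auto simp: space_PiM PiE_def extensional_def)
    ultimately show ?thesis using measurable_cong[of "lebd d" "\<lambda>y. y i" "\<lambda>y. undefined"] by simp
  qed
  then show ?thesis unfolding lebOm_def by (rule measurable_restrict_space1)
qed

lemma NN_meas: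
  assumes "\<rho> \<in> borel_measurable borel" "g \<in> NN \<sigma> \<rho> d W"
  shows "g \<in> borel_measurable (lebOm d \<Omega>)"
proof -
  obtain ns ls where g: "g = (\<lambda>x. realize \<rho> ns ls x 0)" "valid_net d ns ls"
    using assms(2) unfolding NN_def by blast
  show ?thesis unfolding g(1)
    by (rule measurable_realize[OF assms(1), where h="\<lambda>y. y"]) (use g(2) comp_meas in \<open>auto simp: valid_net_def\<close>)
qed

lemma zero_L2: "(\<lambda>x. 0) \<in> L2 d \<Omega>"
  unfolding L2_def by simp

lemma L2_close:
  assumes f: "f \<in> L2 d \<Omega>" and g: "g \<in> borel_measurable (lebOm d \<Omega>)"
    and dist: "L2dist_sq d \<Omega> f g < \<infinity>"
  shows "g \<in> L2 d \<Omega>"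
proof -
  have fm: "f \<in> borel_measurable (lebOm d \<Omega>)" and fi: "(\<integral>\<^sup>+ x. ennreal ((f x)\<^sup>2) \<partial>lebOm d \<Omega>) < \<infinity>"
    using f unfolding L2_def by auto
  have "(\<integral>\<^sup>+ x. ennreal ((g x)\<^sup>2) \<partial>lebOm d \<Omega>) \<le> (\<integral>\<^sup>+ x. (2 * ennreal ((f x)\<^sup>2) + 2 * ennreal ((f x - g x)\<^sup>2)) \<partial>lebOm d \<Omega>)"
  proof (rule nn_integral_mono)
    fix x
    have e: "2 * (f x)\<^sup>2 + 2 * (f x - g x)\<^sup>2 - (g x)\<^sup>2 = (2 * f x - g x)\<^sup>2"
      by (simp add: power2_eq_square algebra_simps)
    have "0 \<le> (2 * f x - g x)\<^sup>2" by simp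
    then have "(g x)\<^sup>2 \<le> 2 * (f x)\<^sup>2 + 2 * (f x - g x)\<^sup>2" using e by linarith
    then have "ennreal ((g x)\<^sup>2) \<le> ennreal (2 * (f x)\<^sup>2 + 2 * (f x - g x)\<^sup>2)" by (rule ennreal_leI)
    also have "\<dots> = 2 * ennreal ((f x)\<^sup>2) + 2 * ennreal ((f x - g x)\<^sup>2)"
      by (simp add: ennreal_plus ennreal_mult)
    finally show "ennreal ((g x)\<^sup>2) \<le> 2 * ennreal ((f x)\<^sup>2) + 2 * ennreal ((f x - g x)\<^sup>2)" .
  qed
  also have "\<dots> = (\<integral>\<^sup>+ x. 2 * ennreal ((f x)\<^sup>2) \<partial>lebOm d \<Omega>) + (\<integral>\<^sup>+ x. 2 * ennreal ((f x - g x)\<^sup>2) \<partial>lebOm d \<Omega>)"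
  proof (rule nn_integral_add)
    show "(\<lambda>x. 2 * ennreal ((f x)\<^sup>2)) \<in> borel_measurable (lebOm d \<Omega>)" using fm by measurable
    show "(\<lambda>x. 2 * ennreal ((f x - g x)\<^sup>2)) \<in> borel_measurable (lebOm d \<Omega>)" using fm g by measurable
  qed
  also have "\<dots> = 2 * (\<integral>\<^sup>+ x. ennreal ((f x)\<^sup>2) \<partial>lebOm d \<Omega>) + 2 * L2dist_sq d \<Omega> f g"
    unfolding L2dist_sq_def using fm g
    by (simp add: nn_integral_cmult)
  also have "\<dots> < \<infinity>" using fi dist by (simp add: ennreal_mult_less_top)
  finally show ?thesis using g unfolding L2_def by simp
qed

lemma L2dist_le:
  assumes "L2dist_sq d \<Omega> f g \<le> ennreal (\<epsilon>\<^sup>2)" "0 \<le> \<epsilon>"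
  shows "L2dist d \<Omega> f g \<le> \<epsilon>"
proof -
  have "enn2real (L2dist_sq d \<Omega> f g) \<le> enn2real (ennreal (\<epsilon>\<^sup>2))"
    using assms(1) by (intro enn2real_mono) auto
  then have "enn2real (L2dist_sq d \<Omega> f g) \<le> \<epsilon>\<^sup>2" by simp
  then show ?thesis unfolding L2dist_def using assms(2) real_sqrt_le_mono[of _ "\<epsilon>\<^sup>2"] by fastforce
qed

lemma W_eps_attained:
  assumes "W_eps \<sigma> \<rho> d \<Omega> f \<epsilon> \<noteq> \<infinity>"
  shows "\<exists>W0 g. 1 \<le> W0 \<and> g \<in> NN \<sigma> \<rho> d W0 \<and> L2dist_sq d \<Omega> f g \<le> ennreal (\<epsilon>\<^sup>2) \<and>
      the_enat (W_eps \<sigma> \<rho> d \<Omega> f \<epsilon>) = W0"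
proof -
  define S where "S = {W. W \<ge> 1 \<and> (\<exists>g \<in> NN \<sigma> \<rho> d W. L2dist_sq d \<Omega> f g \<le> ennreal (\<epsilon>\<^sup>2))}"
  have WS: "W_eps \<sigma> \<rho> d \<Omega> f \<epsilon> = (INF W\<in>S. enat W)" unfolding W_eps_def S_def ..
  have "S \<noteq> {}"
  proof
    assume "S = {}"
    then have "W_eps \<sigma> \<rho> d \<Omega> f \<epsilon> = \<infinity>" unfolding WS by (simp add: top_enat_def)
    then show False using assms by simp
  qed
  then obtain W1 where "W1 \<in> S" by blast
  define W0 where "W0 = (LEAST W. W \<in> S)"
  have W0S: "W0 \<in> S" unfolding W0_def using \<open>W1 \<in> S\<close> by (rule LeastI)
  have "(INF W\<in>S. enat W) = enat W0"
  proof (rule antisym)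
    show "(INF W\<in>S. enat W) \<le> enat W0" using W0S by (rule INF_lower)
    show "enat W0 \<le> (INF W\<in>S. enat W)"
      by (rule INF_greatest) (simp add: W0_def Least_le)
  qed
  then show ?thesis using W0S unfolding WS S_def by auto
qed

context
  fixes \<rho> :: "real \<Rightarrow> real" and \<sigma> d :: nat and \<Omega> :: "(nat \<Rightarrow> real) set"
begin

definition V :: "nat \<Rightarrow> ((nat \<Rightarrow> real) \<Rightarrow> real) set" where
  "V W = {g \<in> L2 d \<Omega>. g = (\<lambda>x. 0) \<or> g \<in> Real \<rho> \<sigma> d W}"

lemma V_card: "finite (V W) \<and> card (V W) \<le> 1 + Bnd \<sigma> d W"
proof -
  have sub: "V W \<subseteq> insert (\<lambda>x. 0) (Real \<rho> \<sigma> d W)" unfolding V_def by auto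
  have fin: "finite (insert (\<lambda>x. 0) (Real \<rho> \<sigma> d W))" using Real_Bnd by auto
  have "card (V W) \<le> card (insert (\<lambda>x. 0) (Real \<rho> \<sigma> d W))" by (rule card_mono[OF fin sub])
  also have "\<dots> \<le> Suc (card (Real \<rho> \<sigma> d W))" by (rule card_insert_le_m1) simp_all
  also have "\<dots> \<le> 1 + Bnd \<sigma> d W" using Real_Bnd[of \<rho> \<sigma> d W] by simp
  finally show ?thesis using finite_subset[OF sub fin] by simp
qed

definition Wset :: "nat \<Rightarrow> nat set" where
  "Wset R = {W. 1 \<le> W \<and> W \<le> R \<and> card (V W) \<le> 2 ^ R}"

definition SR :: "nat \<Rightarrow> ((nat \<Rightarrow> real) \<Rightarrow> real) set" where
  "SR R = (if Wset R = {} then {\<lambda>x. 0} else V (Max (Wset R)))"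

lemma Wset_fin: "finite (Wset R)"
  by (rule finite_subset[of _ "{..R}"]) (auto simp: Wset_def)

lemma SR_props: "finite (SR R) \<and> (\<lambda>x. 0) \<in> SR R \<and> SR R \<subseteq> L2 d \<Omega> \<and> card (SR R) \<le> 2 ^ R"
proof (cases "Wset R = {}")
  case True
  then show ?thesis unfolding SR_def using zero_L2 by auto
next
  case False
  have "Max (Wset R) \<in> Wset R" using False Wset_fin by simp
  then have "card (V (Max (Wset R))) \<le> 2 ^ R" unfolding Wset_def by simp
  then show ?thesis unfolding SR_def using False V_card zero_L2 unfolding V_def by auto
qed

definition BL :: "nat \<Rightarrow> bool list set" where "BL R = {bs. set bs \<subseteq> UNIV \<and> length bs = R}"

lemma BL_props: "finite (BL R) \<and> card (BL R) = 2 ^ R"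
  unfolding BL_def using card_lists_length_eq[of "UNIV :: bool set" R] finite_lists_length_eq[of "UNIV :: bool set" R]
  by simp

definition enc :: "nat \<Rightarrow> ((nat \<Rightarrow> real) \<Rightarrow> real) \<Rightarrow> bool list" where
  "enc R = (SOME e. e ` SR R \<subseteq> BL R \<and> inj_on e (SR R))"

lemma enc_props: "enc R ` SR R \<subseteq> BL R \<and> inj_on (enc R) (SR R)"
proof -
  have "\<exists>e. e ` SR R \<subseteq> BL R \<and> inj_on e (SR R)"
    by (rule card_le_inj) (use SR_props BL_props in auto)
  then show ?thesis unfolding enc_def by (rule someI_ex)
qed

definition best :: "nat \<Rightarrow> ((nat \<Rightarrow> real) \<Rightarrow> real) \<Rightarrow> ((nat \<Rightarrow> real) \<Rightarrow> real)" where
  "best R f = (SOME g. g \<in> SR R \<and> (\<forall>h\<in>SR R. L2dist_sq d \<Omega> f g \<le> L2dist_sq d \<Omega> f h))"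

lemma best_props: "best R f \<in> SR R \<and> (\<forall>h\<in>SR R. L2dist_sq d \<Omega> f (best R f) \<le> L2dist_sq d \<Omega> f h)"
proof -
  let ?I = "(\<lambda>h. L2dist_sq d \<Omega> f h) ` SR R"
  have fin: "finite ?I" using SR_props by auto
  have ne: "?I \<noteq> {}" using SR_props by auto
  obtain g where g: "g \<in> SR R" "Min ?I = L2dist_sq d \<Omega> f g" using Min_in[OF fin ne] by auto
  have "\<forall>h\<in>SR R. L2dist_sq d \<Omega> f g \<le> L2dist_sq d \<Omega> f h" using g(2) Min_le[OF fin] by auto
  then have "\<exists>g. g \<in> SR R \<and> (\<forall>h\<in>SR R. L2dist_sq d \<Omega> f g \<le> L2dist_sq d \<Omega> f h)" using g(1) by blast
  then show ?thesis unfolding best_def by (rule someI_ex)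
qed

definition Ecod :: "nat \<Rightarrow> ((nat \<Rightarrow> real) \<Rightarrow> real) \<Rightarrow> bool list" where
  "Ecod R f = enc R (best R f)"

definition Dcod :: "nat \<Rightarrow> bool list \<Rightarrow> ((nat \<Rightarrow> real) \<Rightarrow> real)" where
  "Dcod R bs = (if bs \<in> enc R ` SR R then inv_into (SR R) (enc R) bs else (\<lambda>x. 0))"

lemma Ecod_len: "length (Ecod R f) = R"
  using enc_props best_props unfolding Ecod_def BL_def by blast

lemma Dcod_L2: "Dcod R bs \<in> L2 d \<Omega>"
  unfolding Dcod_def using SR_props inv_into_into[of bs "enc R" "SR R"] zero_L2 by auto

lemma DE: "Dcod R (Ecod R f) = best R f"
  unfolding Dcod_def Ecod_def using best_props enc_props by (auto intro: inv_into_f_f)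

lemma key_step:
  assumes rho: "\<rho> \<in> borel_measurable borel" "\<rho> 0 = 0" and d1: "1 \<le> d"
    and f: "f \<in> L2 d \<Omega>" and eps: "0 < \<epsilon>" and ne: "Wset R \<noteq> {}"
    and fin: "W_eps \<sigma> \<rho> d \<Omega> f \<epsilon> \<noteq> \<infinity>" and le: "the_enat (W_eps \<sigma> \<rho> d \<Omega> f \<epsilon>) \<le> Max (Wset R)"
  shows "L2dist d \<Omega> f (Dcod R (Ecod R f)) \<le> \<epsilon>"
proof -
  obtain W0 g where g: "1 \<le> W0" "g \<in> NN \<sigma> \<rho> d W0" "L2dist_sq d \<Omega> f g \<le> ennreal (\<epsilon>\<^sup>2)"
     "the_enat (W_eps \<sigma> \<rho> d \<Omega> f \<epsilon>) = W0"
    using W_eps_attained[OF fin] by blast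
  have gm: "g \<in> borel_measurable (lebOm d \<Omega>)" by (rule NN_meas[OF rho(1) g(2)])
  have "L2dist_sq d \<Omega> f g < \<infinity>" using g(3) by (rule le_less_trans) simp
  then have gL: "g \<in> L2 d \<Omega>" by (rule L2_close[OF f gm])
  have "g \<in> Real \<rho> \<sigma> d (Max (Wset R))" using NN_sub_Real[where \<rho>=\<rho>, OF rho(2) d1 g(1)] le g(2,4) by auto
  then have "g \<in> SR R" unfolding SR_def V_def using ne gL by auto
  then have "L2dist_sq d \<Omega> f (best R f) \<le> ennreal (\<epsilon>\<^sup>2)" using best_props g(3) order_trans by blast
  then show ?thesis unfolding DE using L2dist_le eps by auto
qed

lemma Wset_big:
  assumes "0 < \<eta>" "\<eta> < 1"
  shows "eventually (\<lambda>R::nat. Wset R \<noteq> {} \<and> real R powr (1 - \<eta>) \<le> real (Max (Wset R))) sequentially"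
proof -
  have ev: "eventually (\<lambda>x::real. FF \<sigma> (x powr (1 - \<eta>) + real d + 5) \<le> x * ln 2 \<and> 1 \<le> x) at_top"
    using FF_asymp[OF assms, of \<sigma> d] eventually_ge_at_top[of "1::real"] by eventually_elim auto
  have "eventually (\<lambda>R::nat. FF \<sigma> (real R powr (1 - \<eta>) + real d + 5) \<le> real R * ln 2 \<and> 1 \<le> real R) sequentially"
    using filterlim_real_sequentially ev unfolding filterlim_iff by blast
  then show ?thesis
  proof eventually_elim
    case (elim R)
    define x where "x = real R powr (1 - \<eta>)"
    define W where "W = nat \<lceil>x\<rceil>"
    have R1: "1 \<le> real R" using elim by simp
    have x1: "1 \<le> x" unfolding x_def using R1 assms by (simp add: ge_one_powr_ge_zero)
    have "real R powr (1 - \<eta>) \<le> real R powr 1" by (rule powr_mono) (use assms R1 in auto)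
    then have xR: "x \<le> real R" unfolding x_def using R1 by simp
    have W1: "1 \<le> W" unfolding W_def using x1 by linarith
    have WR: "W \<le> R" unfolding W_def using xR by linarith
    have Wx: "x \<le> real W" "real W \<le> x + 1" unfolding W_def using x1 by linarith+
    have "ln (real (1 + Bnd \<sigma> d W)) \<le> FF \<sigma> (real (d + W + 4))" by (rule ln_Bnd[OF W1])
    also have "\<dots> \<le> FF \<sigma> (x + real d + 5)" using Wx by (intro FF_mono) auto
    also have "\<dots> \<le> real R * ln 2" using elim unfolding x_def by simp
    finally have L: "ln (real (1 + Bnd \<sigma> d W)) \<le> real R * ln 2" .
    have "real (1 + Bnd \<sigma> d W) = exp (ln (real (1 + Bnd \<sigma> d W)))"
      by (rule exp_ln[symmetric]) simp
    also have "\<dots> \<le> exp (real R * ln 2)" using L by (simp only: exp_le_cancel_iff)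
    also have "exp (real R * ln 2) = 2 ^ R"
      by (simp add: exp_of_nat_mult)
    finally have "real (1 + Bnd \<sigma> d W) \<le> real ((2::nat) ^ R)" by (simp only: of_nat_power of_nat_numeral)
    then have "1 + Bnd \<sigma> d W \<le> 2 ^ R" by (simp only: of_nat_le_iff)
    then have "card (V W) \<le> 2 ^ R" using V_card[of W] by simp
    then have WW: "W \<in> Wset R" unfolding Wset_def using W1 WR by simp
    then have "W \<le> Max (Wset R)" using Wset_fin by simp
    then show ?case using WW Wx unfolding x_def by force
  qed
qed

end

lemma powr_tendsto_nat:
  assumes "\<eta> < 1"
  shows "filterlim (\<lambda>R::nat. real R powr (1 - \<eta>)) at_top sequentially"
  using assms by real_asymp

theorem lemmaF2:
  fixes d \<sigma> :: nat and \<Omega> :: "(nat \<Rightarrow> real) set" and \<rho> :: "real \<Rightarrow> real"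
  assumes "d \<ge> 1"
    and "\<Omega> \<in> sets (lebd d)"
    and "\<rho> \<in> borel_measurable borel"
    and "\<rho> 0 = 0"
    and "\<sigma> \<ge> 1"
  shows "\<exists>(E :: nat \<Rightarrow> ((nat \<Rightarrow> real) \<Rightarrow> real) \<Rightarrow> bool list)
            (D :: nat \<Rightarrow> bool list \<Rightarrow> ((nat \<Rightarrow> real) \<Rightarrow> real)).
           (\<forall>R f. f \<in> L2 d \<Omega> \<longrightarrow> length (E R f) = R) \<and>
           (\<forall>R bs. length bs = R \<longrightarrow> D R bs \<in> L2 d \<Omega>) \<and>
           (\<forall>\<tau>::real. \<tau> > 0 \<longrightarrow> (\<forall>\<delta>::real. 0 < \<delta> \<and> \<delta> < 1 / \<tau> \<longrightarrow>
              approx_space \<tau> \<sigma> \<rho> d \<Omega> \<subseteq>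
                {f \<in> L2 d \<Omega>. \<exists>C. \<forall>R::nat. R \<ge> 1 \<longrightarrow>
                   real R powr (1 / \<tau> - \<delta>) * L2dist d \<Omega> f (D R (E R f)) \<le> C}))"
proof (intro exI[of _ "Ecod \<rho> \<sigma> d \<Omega>"] exI[of _ "Dcod \<rho> \<sigma> d \<Omega>"] conjI allI impI)
  fix R f show "length (Ecod \<rho> \<sigma> d \<Omega> R f) = R" by (rule Ecod_len)
next
  fix R bs show "Dcod \<rho> \<sigma> d \<Omega> R bs \<in> L2 d \<Omega>" by (rule Dcod_L2)
next
  fix \<tau> \<delta> :: real
  assume \<tau>: "0 < \<tau>" and \<delta>: "0 < \<delta> \<and> \<delta> < 1 / \<tau>"
  let ?E = "Ecod \<rho> \<sigma> d \<Omega>" and ?D = "Dcod \<rho> \<sigma> d \<Omega>"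
  show "approx_space \<tau> \<sigma> \<rho> d \<Omega> \<subseteq>
         {f \<in> L2 d \<Omega>. \<exists>C. \<forall>R::nat. R \<ge> 1 \<longrightarrow>
            real R powr (1 / \<tau> - \<delta>) * L2dist d \<Omega> f (?D R (?E R f)) \<le> C}"
  proof
    fix f assume fA: "f \<in> approx_space \<tau> \<sigma> \<rho> d \<Omega>"
    have fL: "f \<in> L2 d \<Omega>" using fA unfolding approx_space_def by simp
    obtain C where C: "C > 0" and hC: "\<And>\<epsilon>. 0 < \<epsilon> \<Longrightarrow> \<epsilon> < 1 \<Longrightarrow> W_eps \<sigma> \<rho> d \<Omega> f \<epsilon> \<noteq> \<infinity> \<and>
       real (the_enat (W_eps \<sigma> \<rho> d \<Omega> f \<epsilon>)) \<le> C * \<epsilon> powr (- \<tau>)"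
      using fA unfolding approx_space_def by blast
    define \<eta> where "\<eta> = \<delta> * \<tau>"
    have \<eta>: "0 < \<eta>" "\<eta> < 1" unfolding \<eta>_def using \<tau> \<delta> by (auto simp: field_simps)
    define a where "a = 1 / \<tau> - \<delta>"
    have a_eq: "(1 - \<eta>) / \<tau> = a" unfolding a_def \<eta>_def using \<tau> by (simp add: field_simps)
    have ev1: "eventually (\<lambda>R::nat. Wset \<rho> \<sigma> d \<Omega> R \<noteq> {} \<and> real R powr (1 - \<eta>) \<le> real (Max (Wset \<rho> \<sigma> d \<Omega> R))) sequentially"
      by (rule Wset_big[OF \<eta>])
    have ev2: "eventually (\<lambda>R::nat. C < real R powr (1 - \<eta>)) sequentially"
      using powr_tendsto_nat[OF \<eta>(2)] by (simp add: filterlim_at_top_dense)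
    have ev3: "eventually (\<lambda>R::nat. 1 \<le> R) sequentially" by (rule eventually_ge_at_top)
    obtain N0 where N0: "\<And>R. R \<ge> N0 \<Longrightarrow> (Wset \<rho> \<sigma> d \<Omega> R \<noteq> {} \<and> real R powr (1 - \<eta>) \<le> real (Max (Wset \<rho> \<sigma> d \<Omega> R)))
        \<and> C < real R powr (1 - \<eta>) \<and> 1 \<le> R"
      using eventually_conj[OF ev1 eventually_conj[OF ev2 ev3]] unfolding eventually_sequentially by blast
    have bnd: "real R powr a * L2dist d \<Omega> f (?D R (?E R f)) \<le> C powr (1 / \<tau>)" if R: "R \<ge> N0" for R
    proof -
      define Wm where "Wm = Max (Wset \<rho> \<sigma> d \<Omega> R)"
      have ne: "Wset \<rho> \<sigma> d \<Omega> R \<noteq> {}" and RW: "real R powr (1 - \<eta>) \<le> real Wm"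
        and CR: "C < real R powr (1 - \<eta>)" and R1: "1 \<le> R"
        using N0[OF R] unfolding Wm_def by auto
      have CW: "C < real Wm" using CR RW by linarith
      have Wpos: "0 < real Wm" using CW C by linarith
      have q: "0 < C / real Wm" "C / real Wm < 1" using C CW Wpos by (auto simp: field_simps)
      define \<epsilon> where "\<epsilon> = (C / real Wm) powr (1 / \<tau>)"
      have e0: "0 < \<epsilon>" unfolding \<epsilon>_def using q by (simp only: powr_gt_zero)
      have e1: "\<epsilon> < 1" unfolding \<epsilon>_def using q \<tau> by (simp add: powr01_less_one)
      have "\<epsilon> powr (- \<tau>) = (C / real Wm) powr ((1 / \<tau>) * (- \<tau>))" unfolding \<epsilon>_def by (simp add: powr_powr)
      also have "(1 / \<tau>) * (- \<tau>) = -1" using \<tau> by simp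
      also have "(C / real Wm) powr (-1) = real Wm / C" using q C by (simp add: powr_minus_divide)
      finally have "C * \<epsilon> powr (- \<tau>) = real Wm" using C by simp
      then have "real (the_enat (W_eps \<sigma> \<rho> d \<Omega> f \<epsilon>)) \<le> real Wm" using hC[OF e0 e1] by simp
      then have le: "the_enat (W_eps \<sigma> \<rho> d \<Omega> f \<epsilon>) \<le> Wm" by simp
      have dist: "L2dist d \<Omega> f (?D R (?E R f)) \<le> \<epsilon>"
        using key_step[OF assms(3,4,1) fL e0 ne] hC[OF e0 e1] le unfolding Wm_def by blast
      have Rpos: "0 < real R powr (1 - \<eta>)" using R1 by simp
      have "\<epsilon> \<le> (C / real R powr (1 - \<eta>)) powr (1 / \<tau>)" unfolding \<epsilon>_def
        using q C Rpos RW \<tau> by (intro powr_mono2 divide_left_mono) auto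
      also have "\<dots> = C powr (1 / \<tau>) / real R powr a"
        using C Rpos R1 by (simp add: powr_divide powr_powr a_eq)
      finally have eps_le: "\<epsilon> \<le> C powr (1 / \<tau>) / real R powr a" .
      have Ra: "0 < real R powr a" using R1 by simp
      have "real R powr a * L2dist d \<Omega> f (?D R (?E R f)) \<le> real R powr a * \<epsilon>"
        using dist Ra by (intro mult_left_mono) auto
      also have "\<dots> \<le> real R powr a * (C powr (1 / \<tau>) / real R powr a)"
        using eps_le Ra by (intro mult_left_mono) auto
      also have "\<dots> = C powr (1 / \<tau>)" using Ra by simp
      finally show ?thesis .
    qed
    define K where "K = C powr (1 / \<tau>) + (\<Sum>R<N0. \<bar>real R powr a * L2dist d \<Omega> f (?D R (?E R f))\<bar>)"
    have "\<forall>R::nat. R \<ge> 1 \<longrightarrow> real R powr (1 / \<tau> - \<delta>) * L2dist d \<Omega> f (?D R (?E R f)) \<le> K"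
    proof (intro allI impI)
      fix R :: nat assume "1 \<le> R"
      have s0: "0 \<le> (\<Sum>R<N0. \<bar>real R powr a * L2dist d \<Omega> f (?D R (?E R f))\<bar>)" by (simp add: sum_nonneg)
      have c0: "0 \<le> C powr (1 / \<tau>)" by simp
      show "real R powr (1 / \<tau> - \<delta>) * L2dist d \<Omega> f (?D R (?E R f)) \<le> K"
      proof (cases "R \<ge> N0")
        case True
        then show ?thesis using bnd[OF True] s0 unfolding K_def a_def by linarith
      next
        case False
        then have "\<bar>real R powr a * L2dist d \<Omega> f (?D R (?E R f))\<bar>
            \<le> (\<Sum>R<N0. \<bar>real R powr a * L2dist d \<Omega> f (?D R (?E R f))\<bar>)"
          by (intro member_le_sum) auto
        then show ?thesis using c0 unfolding K_def a_def by linarith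
      qed
    qed
    then show "f \<in> {f \<in> L2 d \<Omega>. \<exists>C. \<forall>R::nat. R \<ge> 1 \<longrightarrow>
            real R powr (1 / \<tau> - \<delta>) * L2dist d \<Omega> f (?D R (?E R f)) \<le> C}"
      using fL by blast
  qed
qed

end
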